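(* Let $n\ge2$, $m\ge2$, let $p_j\in\{1,\infty\}$ for all $j=1,\dots,m$, and $\frac1p=\sum_{j=1}^m\frac1{p_j}$. Then the strong type estimate $\|\mathcal M(f_1,\dots,f_m)\|_{L^p(\mathbb R^n)}\le C\prod_{j=1}^m\|f_j\|_{L^{p_j}(\mathbb R^n)}$ holds (for some constant $C$ and all $f_j$) if and only if $p_j=\infty$ for all $j=1,\dots,m$.
   Context: For functions $f_1,\dots,f_m$ on $\mathbb R^n$ the $m$-linear spherical maximal function is $$\mathcal M(f_1,\dots,f_m)(x)=\sup_{t>0}\Big|\int_{\mathbb S^{mn-1}}\prod_{j=1}^m f_j(x-ty^j)\,d\sigma_{mn-1}(y^1,\dots,y^m)\Big|,$$ where $(y^1,\dots,y^m)\in\mathbb R^{mn}$ with $y^j\in\mathbb R^n$, and $d\sigma_{mn-1}$ is the surface measure on the unit sphere $\mathbb S^{mn-1}\subset\mathbb R^{mn}$. *)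

theory Defs
  imports "HOL-Analysis.Analysis"
begin

text \<open>Surface measure on the unit sphere of a Euclidean space of dimension d, defined via the
  cone identity: sigma(A) = d * lambda({r*theta. 0 <= r < 1, theta in A}).  Equivalently it is d times
  the push-forward of Lebesgue measure on the open unit ball under x maps to x/|x|
  (the origin is a null set).\<close>
definition sphere_measure :: "'a::euclidean_space measure" where
  "sphere_measure =
     density (distr (density lborel (indicator (ball (0::'a) 1))) borel sgn)
             (\<lambda>_. of_nat DIM('a))"

definition enn_powr :: "ennreal \<Rightarrow> real \<Rightarrow> ennreal" where
  "enn_powr g r = (if g = \<infinity> then \<infinity> else ennreal (enn2real g powr r))"

definition ess_sup_enn :: "('a::euclidean_space \<Rightarrow> ennreal) \<Rightarrow> ennreal" where
  "ess_sup_enn g = Inf {c. AE x in lborel. g x \<le> c}"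

definition Lq_norm :: "ennreal \<Rightarrow> ('a::euclidean_space \<Rightarrow> ennreal) \<Rightarrow> ennreal" where
  "Lq_norm q g = (if q = \<infinity> then ess_sup_enn g
                  else enn_powr (\<integral>\<^sup>+ x. enn_powr (g x) (enn2real q) \<partial>lborel) (1 / enn2real q))"

text \<open>The points of R^(mn) are written as
  (y^1,...,y^m) with y^j in R^n, i.e. elements of (real^'n)^'m.\<close>
definition sph_avg :: "('m::finite \<Rightarrow> real^'n \<Rightarrow> real) \<Rightarrow> real^'n \<Rightarrow> real \<Rightarrow> ennreal" where
  "sph_avg f x t =
     (let h = (\<lambda>y::(real^'n)^'m. \<Prod>j\<in>UNIV. f j (x - t *\<^sub>R (y $ j)))
      in if integrable sphere_measure h then ennreal \<bar>integral\<^sup>L sphere_measure h\<bar> else \<infinity>)"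

definition multi_sph_max :: "('m::finite \<Rightarrow> real^'n \<Rightarrow> real) \<Rightarrow> real^'n \<Rightarrow> ennreal" where
  "multi_sph_max f x = (SUP t\<in>{0<..}. sph_avg f x t)"

end

theory Submission
  imports Defs "HOL-Probability.Essential_Supremum"
begin
definition mix :: "'m set \<Rightarrow> 'a^'m \<Rightarrow> 'a^'m \<Rightarrow> 'a^'m" where
  "mix K a w = (\<chi> i. if i \<in> K then a $ i else w $ i)"

lemma mix_nth[simp]: "mix K a w $ i = (if i \<in> K then a $ i else w $ i)"
  by (simp add: mix_def)

lemma mem_box_vec:
  fixes x :: "'a::euclidean_space ^ 'm::finite"
  shows "x \<in> box l u \<longleftrightarrow> (\<forall>i. x $ i \<in> box (l $ i) (u $ i))"
  by (auto simp: mem_box Basis_vec_def inner_axis)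

lemma prod_Basis_vec:
  fixes g :: "'a::euclidean_space ^ 'm::finite \<Rightarrow> 'b::comm_monoid_mult"
  shows "(\<Prod>b\<in>Basis. g b) = (\<Prod>i\<in>UNIV. \<Prod>u\<in>Basis. g (axis i u))"
proof -
  have "(\<Prod>b\<in>Basis. g b) = (\<Prod>b\<in>(\<Union>i. \<Union>u\<in>Basis. {axis i u}). g b)"
    by (simp add: Basis_vec_def)
  also have "\<dots> = (\<Prod>i\<in>UNIV. \<Prod>b\<in>(\<Union>u\<in>(Basis::'a set). {axis i u}). g b)"
    by (rule prod.UNION_disjoint) (auto simp: axis_eq_axis)
  also have "\<dots> = (\<Prod>i\<in>UNIV. \<Prod>u\<in>Basis. g (axis i u))"
  proof (rule prod.cong[OF refl])
    fix i :: 'm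
    have "(\<Union>u\<in>(Basis::'a set). {axis i u}) = axis i ` Basis" by auto
    moreover have "inj_on (axis i) (Basis::'a set)"
      by (auto intro!: inj_onI simp: axis_eq_axis)
    ultimately show "(\<Prod>b\<in>(\<Union>u\<in>(Basis::'a set). {axis i u}). g b) = (\<Prod>u\<in>Basis. g (axis i u))"
      by (simp add: prod.reindex)
  qed
  finally show ?thesis .
qed

lemma vol_box_vec:
  fixes l u :: "'a::euclidean_space ^ 'm::finite"
  shows "(\<Prod>b\<in>Basis. (u - l) \<bullet> b) = (\<Prod>i\<in>UNIV. \<Prod>v\<in>Basis. (u $ i - l $ i) \<bullet> v)"
  by (simp add: prod_Basis_vec inner_axis)

lemma le_Basis_vec:
  fixes l u :: "'a::euclidean_space ^ 'm::finite"
  shows "(\<forall>b\<in>Basis. l \<bullet> b \<le> u \<bullet> b) \<longleftrightarrow> (\<forall>i. \<forall>v\<in>Basis. l $ i \<bullet> v \<le> u $ i \<bullet> v)"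
  by (auto simp: Basis_vec_def inner_axis)

lemma mix_measurable[measurable]:
  "(\<lambda>p. mix K (fst p) (snd p)) \<in> borel_measurable (borel::((('a::euclidean_space)^('m::finite)) \<times> ('a^'m)) measure)"
  unfolding mix_def
proof (intro borel_measurable_continuous_onI continuous_on_vec_lambda)
  fix i
  show "continuous_on UNIV (\<lambda>x::('a^'m) \<times> ('a^'m). if i \<in> K then fst x $ i else snd x $ i)"
    by (cases "i \<in> K") (auto intro!: continuous_intros continuous_on_fst continuous_on_snd)
qed

lemma One_vec_nth[simp]: "(One::'a::euclidean_space^'m::finite) $ i = One"
proof (rule euclidean_eqI)
  fix v :: 'a assume v: "v \<in> Basis"
  hence "axis i v \<in> (Basis::('a^'m) set)" by (auto simp: Basis_vec_def)
  hence "(One::'a^'m) \<bullet> axis i v = 1" by simp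
  thus "(One::'a^'m) $ i \<bullet> v = One \<bullet> v" using v by (simp add: inner_axis)
qed

lemma One_vec_nth'[simp]: "(\<Sum>x\<in>(Basis::('a::euclidean_space^'m::finite) set). x $ i) = (One::'a)"
  using One_vec_nth[where 'a='a and 'm='m and i=i] by simp

lemma mix_measurable'[measurable]:
  fixes f g :: "'b \<Rightarrow> 'a::euclidean_space^'m::finite"
  assumes [measurable]: "f \<in> borel_measurable M" "g \<in> borel_measurable M"
  shows "(\<lambda>x. mix K (f x) (g x)) \<in> borel_measurable M"
proof -
  have "(\<lambda>x. (f x, g x)) \<in> M \<rightarrow>\<^sub>M borel \<Otimes>\<^sub>M borel" by measurable
  hence "(\<lambda>x. (f x, g x)) \<in> borel_measurable M" by (simp add: borel_prod)
  from measurable_compose[OF this mix_measurable[of K]] show ?thesis by simp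
qed

lemma emeasure_box_vec:
  fixes L U :: "'a::euclidean_space^'m::finite"
  assumes "\<And>i v. v \<in> Basis \<Longrightarrow> L$i \<bullet> v \<le> U$i \<bullet> v"
  shows "emeasure lborel (box L U) = ennreal (\<Prod>i\<in>UNIV. \<Prod>v\<in>Basis. (U$i - L$i) \<bullet> v)"
proof -
  have "\<And>b. b \<in> Basis \<Longrightarrow> L \<bullet> b \<le> U \<bullet> b"
    using assms le_Basis_vec[of L U] by blast
  hence "emeasure lborel (box L U) = ennreal (\<Prod>b\<in>Basis. (U - L) \<bullet> b)"
    by (simp add: emeasure_lborel_box_eq)
  thus ?thesis by (simp add: vol_box_vec)
qed

lemma block_fubini:
  fixes F :: "'a::euclidean_space ^ 'm::finite \<Rightarrow> ennreal"
  assumes F[measurable]: "F \<in> borel_measurable borel"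
  shows "(\<integral>\<^sup>+z. F z \<partial>lborel) =
     (\<integral>\<^sup>+w. \<integral>\<^sup>+a. F (mix K a w) * indicator (box 0 One) (mix K w a) \<partial>lborel \<partial>lborel)"
proof -
  let ?Q = "box 0 (One::'a^'m)"
  let ?D = "\<lambda>p::('a^'m)\<times>('a^'m). indicator ?Q (mix K (fst p) (snd p)) :: ennreal"
  let ?P = "\<lambda>p::('a^'m)\<times>('a^'m). mix K (snd p) (fst p)"
  define \<nu> where "\<nu> = distr (density (lborel \<Otimes>\<^sub>M lborel) ?D) borel ?P"
  have fm[measurable]: "fst \<in> borel_measurable (lborel \<Otimes>\<^sub>M (lborel::('a^'m) measure))"
    using measurable_fst[of "lborel::('a^'m) measure" "lborel::('a^'m) measure"] by simp
  have sm[measurable]: "snd \<in> borel_measurable (lborel \<Otimes>\<^sub>M (lborel::('a^'m) measure))"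
    using measurable_snd[of "lborel::('a^'m) measure" "lborel::('a^'m) measure"] by simp
  have Pm[measurable]: "?P \<in> borel_measurable (lborel \<Otimes>\<^sub>M lborel)"
    by measurable
  have Dm[measurable]: "?D \<in> borel_measurable (lborel \<Otimes>\<^sub>M lborel)"
    by measurable
  have "lborel = \<nu>"
  proof (rule lborel_eqI)
    fix l u :: "'a^'m"
    assume le: "\<And>b. b \<in> Basis \<Longrightarrow> l \<bullet> b \<le> u \<bullet> b"
    hence le': "\<And>i v. v \<in> Basis \<Longrightarrow> l$i \<bullet> v \<le> u$i \<bullet> v"
      using le_Basis_vec[of l u] by blast
    let ?S1 = "box (mix K 0 l) (mix K One u)"
    let ?S2 = "box (mix K l 0) (mix K u One)"
    have m1: "\<And>i. mix K (One::'a^'m) u $ i = (if i \<in> K then One else u$i)"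
      by (simp only: mix_nth One_vec_nth)
    have m2: "\<And>i. mix K l (One::'a^'m) $ i = (if i \<in> K then l$i else One)"
      by (simp only: mix_nth One_vec_nth)
    have S1: "emeasure lborel ?S1 = ennreal (\<Prod>i\<in>UNIV. \<Prod>v\<in>Basis. (if i \<in> K then 1 else (u$i - l$i) \<bullet> v))"
      by (subst emeasure_box_vec) (auto simp: m1 le' inner_diff_left intro!: prod.cong arg_cong[where f=ennreal])
    have S2: "emeasure lborel ?S2 = ennreal (\<Prod>i\<in>UNIV. \<Prod>v\<in>Basis. (if i \<in> K then (u$i - l$i) \<bullet> v else 1))"
      by (subst emeasure_box_vec) (auto simp: m2 le' inner_diff_left intro!: prod.cong arg_cong[where f=ennreal])
    have ind: "?D p * indicator (?P -` box l u \<inter> space (lborel \<Otimes>\<^sub>M lborel)) p = indicator (?S1 \<times> ?S2) p" for p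
      by (cases p) (auto simp: mem_box_vec space_pair_measure split: split_indicator if_split_asm)
    have "emeasure \<nu> (box l u) = emeasure (density (lborel \<Otimes>\<^sub>M lborel) ?D) (?P -` box l u \<inter> space (lborel \<Otimes>\<^sub>M lborel))"
      unfolding \<nu>_def by (subst emeasure_distr) (auto simp: space_density)
    also have "\<dots> = (\<integral>\<^sup>+p. ?D p * indicator (?P -` box l u \<inter> space (lborel \<Otimes>\<^sub>M lborel)) p \<partial>(lborel \<Otimes>\<^sub>M lborel))"
      using measurable_sets[OF Pm, of "box l u"] by (subst emeasure_density) auto
    also have "\<dots> = (\<integral>\<^sup>+p. indicator (?S1 \<times> ?S2) p \<partial>(lborel \<Otimes>\<^sub>M lborel))"
      by (simp add: ind)
    also have "\<dots> = emeasure lborel ?S1 * emeasure lborel ?S2"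
      by (simp add: lborel.emeasure_pair_measure_Times)
    also have "\<dots> = ennreal (\<Prod>i\<in>UNIV. \<Prod>v\<in>Basis. (u$i - l$i) \<bullet> v)"
      unfolding S1 S2
      by (subst ennreal_mult'[symmetric]) (auto simp: prod.distrib[symmetric] le' inner_diff_left
           intro!: prod_nonneg arg_cong[where f=ennreal] prod.cong)
    also have "\<dots> = ennreal (\<Prod>b\<in>Basis. (u - l) \<bullet> b)"
      by (simp add: vol_box_vec)
    finally show "emeasure \<nu> (box l u) = (\<Prod>b\<in>Basis. (u - l) \<bullet> b)" .
  qed (simp add: \<nu>_def)
  hence "(\<integral>\<^sup>+z. F z \<partial>lborel) = (\<integral>\<^sup>+z. F z \<partial>\<nu>)" by simp
  also have "\<dots> = (\<integral>\<^sup>+p. F (?P p) \<partial>density (lborel \<Otimes>\<^sub>M lborel) ?D)"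
    unfolding \<nu>_def by (subst nn_integral_distr) auto
  also have "\<dots> = (\<integral>\<^sup>+p. ?D p * F (?P p) \<partial>(lborel \<Otimes>\<^sub>M lborel))"
    by (subst nn_integral_density) auto
  also have "\<dots> = (\<integral>\<^sup>+w. \<integral>\<^sup>+a. ?D (w,a) * F (?P (w,a)) \<partial>lborel \<partial>lborel)"
    by (subst lborel.nn_integral_fst[symmetric]) auto
  finally show ?thesis by (simp add: mult.commute)
qed

lemma vec_nth_measurable[measurable]: "(\<lambda>x::'a::euclidean_space^'m::finite. x $ i) \<in> borel_measurable borel"
  by (intro borel_measurable_continuous_onI linear_continuous_on bounded_linear_vec_nth)

lemma norm_sq_vec: "norm (x::'a::real_normed_vector^'m::finite) ^ 2 = (\<Sum>i\<in>UNIV. norm (x$i) ^ 2)"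
  by (simp add: norm_vec_def L2_set_def sum_nonneg)

lemma negl_borel: "A \<in> sets borel \<Longrightarrow> negligible A \<longleftrightarrow> emeasure lborel A = 0"
  by (metis negligible_iff_null_sets null_sets_completion_iff sets_lborel null_setsD1 null_setsI)

lemma cyl_null:
  fixes M :: "'a::euclidean_space set" and j :: "'m::finite"
  assumes Mb[measurable]: "M \<in> sets borel" and M0: "emeasure lborel M = 0"
  shows "emeasure lborel {x::'a^'m. x$j \<in> M \<and> (\<forall>i. i \<noteq> j \<longrightarrow> x$i \<in> box 0 One)} = 0"
proof -
  let ?R = "{x::'a^'m. \<forall>i. i \<noteq> j \<longrightarrow> x$i \<in> box 0 One}"
  have Rb[measurable]: "?R \<in> sets borel"
    by measurable
  have pre: "\<And>S i. S \<in> sets borel \<Longrightarrow> (\<lambda>x::'a^'m. x$i) -` S \<in> sets borel"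
    using measurable_sets_borel[OF vec_nth_measurable] by blast
  define \<nu> where "\<nu> = distr (density lborel (indicator ?R)) borel (\<lambda>x. x$j)"
  have "lborel = \<nu>"
  proof (rule lborel_eqI)
    fix l u :: 'a
    assume le: "\<And>b. b \<in> Basis \<Longrightarrow> l \<bullet> b \<le> u \<bullet> b"
    let ?L = "mix {j} (\<chi> _. l) (0::'a^'m)" and ?U = "mix {j} (\<chi> _. u) (One::'a^'m)"
    have mU: "\<And>i. ?U $ i = (if i = j then u else One)" by (simp only: mix_nth One_vec_nth) simp
    have "emeasure \<nu> (box l u) = emeasure (density lborel (indicator ?R)) ((\<lambda>x. x$j) -` box l u)"
      unfolding \<nu>_def by (subst emeasure_distr) auto
    also have "\<dots> = (\<integral>\<^sup>+x. indicator ?R x * indicator ((\<lambda>x. x$j) -` box l u) x \<partial>lborel)"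
      by (subst emeasure_density) (auto intro: pre)
    also have "\<dots> = (\<integral>\<^sup>+x. indicator (box ?L ?U) x \<partial>lborel)"
      by (intro nn_integral_cong) (auto simp: mem_box_vec mU split: split_indicator if_split_asm)
    also have "\<dots> = emeasure lborel (box ?L ?U)" by simp
    also have "\<dots> = ennreal (\<Prod>i\<in>UNIV. \<Prod>v\<in>Basis. (?U$i - ?L$i) \<bullet> v)"
      by (rule emeasure_box_vec) (auto simp: mU le)
    also have "\<dots> = ennreal (\<Prod>i\<in>UNIV. if i = j then (\<Prod>v\<in>Basis. (u - l) \<bullet> v) else 1)"
      by (intro arg_cong[where f=ennreal] prod.cong) (auto simp: mU inner_diff_left)
    also have "\<dots> = ennreal (\<Prod>b\<in>Basis. (u - l) \<bullet> b)"
      by (simp add: prod.If_cases)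
    finally show "emeasure \<nu> (box l u) = (\<Prod>b\<in>Basis. (u - l) \<bullet> b)" .
  qed (simp add: \<nu>_def)
  hence "emeasure \<nu> M = 0" using M0 by simp
  hence "emeasure (density lborel (indicator ?R)) ((\<lambda>x. x$j) -` M) = 0"
    unfolding \<nu>_def by (subst (asm) emeasure_distr) auto
  hence "(\<integral>\<^sup>+x. indicator ?R x * indicator ((\<lambda>x. x$j) -` M) x \<partial>lborel) = 0"
    by (subst (asm) emeasure_density) (auto intro: pre)
  moreover have "(\<integral>\<^sup>+x. indicator ?R x * indicator ((\<lambda>x. x$j) -` M) x \<partial>lborel)
     = emeasure lborel {x::'a^'m. x$j \<in> M \<and> (\<forall>i. i \<noteq> j \<longrightarrow> x$i \<in> box 0 One)}"
  proof -
    have "(\<integral>\<^sup>+x. indicator ?R x * indicator ((\<lambda>x. x$j) -` M) x \<partial>lborel)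
      = (\<integral>\<^sup>+x. indicator {x::'a^'m. x$j \<in> M \<and> (\<forall>i. i \<noteq> j \<longrightarrow> x$i \<in> box 0 One)} x \<partial>lborel)"
      by (intro nn_integral_cong) (auto split: split_indicator)
    also have "\<dots> = emeasure lborel {x::'a^'m. x$j \<in> M \<and> (\<forall>i. i \<noteq> j \<longrightarrow> x$i \<in> box 0 One)}"
      by (rule nn_integral_indicator) simp
    finally show ?thesis .
  qed
  ultimately show ?thesis by simp
qed

lemma norm_mix_single:
  fixes a w :: "'a::real_normed_vector^'m::finite"
  shows "norm (mix {j} a w) ^ 2 = norm (a$j) ^ 2 + norm (mix {j} 0 w) ^ 2"
proof -
  have "\<And>i. norm (mix {j} a w $ i) ^ 2 = (if i = j then norm (a$j)^2 else 0) + norm (mix {j} 0 w $ i) ^ 2"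
    by simp
  hence "(\<Sum>i\<in>UNIV. norm (mix {j} a w $ i) ^ 2) = (\<Sum>i\<in>UNIV. (if i = j then norm (a$j)^2 else 0)) + (\<Sum>i\<in>UNIV. norm (mix {j} 0 w $ i) ^ 2)"
    by (simp add: sum.distrib)
  thus ?thesis by (simp add: norm_sq_vec[of "mix {j} a w"] norm_sq_vec[of "mix {j} 0 w"])
qed

lemma phi_image:
  fixes b :: "'a::real_normed_vector"
  assumes r: "r > 0"
  defines "s \<equiv> sqrt (norm b ^ 2 + r ^ 2)"
  shows "norm (b /\<^sub>R s) < 1" "(r / sqrt (1 - norm (b /\<^sub>R s) ^ 2)) *\<^sub>R (b /\<^sub>R s) = b"
proof -
  have s0: "s > 0" unfolding s_def using r by (intro real_sqrt_gt_zero) (simp add: add_nonneg_pos)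
  have s2: "s ^ 2 = norm b ^ 2 + r ^ 2" unfolding s_def by (simp add: add_nonneg_pos r less_imp_le)
  have "norm b < s" unfolding s_def using r
    by (intro real_less_rsqrt) simp
  hence "norm b / s < 1" using s0 by (simp add: divide_less_eq)
  thus "norm (b /\<^sub>R s) < 1" using s0 by (simp add: divide_inverse mult.commute)
  have pos: "r^2 + norm b ^2 > 0" using r by (simp add: add_pos_nonneg)
  have "1 - norm (b /\<^sub>R s) ^ 2 = 1 - norm b ^ 2 / s ^ 2" using s0 by (simp add: power_mult_distrib divide_inverse power_inverse mult.commute)
  also have "\<dots> = (s^2 - norm b ^ 2) / s ^ 2" using s0 by (simp add: field_simps)
  also have "\<dots> = (r / s) ^ 2" by (simp add: s2 power_divide)
  finally have "1 - norm (b /\<^sub>R s) ^ 2 = (r / s) ^ 2" .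
  hence "sqrt (1 - norm (b /\<^sub>R s) ^ 2) = r / s" using r s0 by simp
  thus "(r / sqrt (1 - norm (b /\<^sub>R s) ^ 2)) *\<^sub>R (b /\<^sub>R s) = b" using r s0 by simp
qed

lemma sphere_null:
  fixes N :: "'a::euclidean_space set" and j :: "'m::finite"
  assumes Nb[measurable]: "N \<in> sets borel" and N0: "emeasure lborel N = 0" and m2: "CARD('m) \<ge> 2"
  shows "emeasure lborel {z::'a^'m. z \<noteq> 0 \<and> sgn z $ j \<in> N} = 0"
proof -
  let ?Z = "{z::'a^'m. z \<noteq> 0 \<and> sgn z $ j \<in> N}"
  have Zb[measurable]: "?Z \<in> sets borel" by measurable
  obtain i0 :: 'm where i0: "i0 \<noteq> j"
  proof -
    have "\<not> (UNIV::'m set) \<subseteq> {j}"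
    proof
      assume "(UNIV::'m set) \<subseteq> {j}"
      hence "CARD('m) \<le> card {j}" by (intro card_mono) auto
      thus False using m2 by simp
    qed
    thus ?thesis using that by blast
  qed
  obtain v :: 'a where v: "v \<in> Basis" using nonempty_Basis by blast
  let ?H = "{w::'a^'m. axis i0 v \<bullet> w = 0}"
  have "axis i0 v \<noteq> 0" using v by (simp add: axis_eq_0_iff nonzero_Basis)
  hence "negligible ?H" by (intro negligible_hyperplane) simp
  moreover have "?H \<in> sets borel" by measurable
  ultimately have Hnull: "?H \<in> null_sets lborel" using negl_borel[of ?H] by (auto intro: null_setsI)
  have sub: "{w \<in> space lborel. \<not> mix {j} 0 w \<noteq> 0} \<subseteq> ?H"
    using i0 by (auto simp: vec_eq_iff inner_axis' dest: spec[of _ i0])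
  have AEw: "AE w in lborel. mix {j} 0 (w::'a^'m) \<noteq> 0"
    using AE_I'[OF Hnull sub] by simp
  have inner: "(\<integral>\<^sup>+a. indicator ?Z (mix {j} a w) * indicator (box 0 One) (mix {j} w a) \<partial>lborel) = 0"
    if w: "mix {j} 0 w \<noteq> 0" for w :: "'a^'m"
  proof -
    define r where "r = norm (mix {j} 0 w)"
    have r: "r > 0" using w by (simp add: r_def)
    define A where "A = {b::'a. b /\<^sub>R sqrt (norm b ^ 2 + r ^ 2) \<in> N}"
    have Ab[measurable]: "A \<in> sets borel" unfolding A_def by measurable
    have Nneg: "negligible N" using negl_borel[of N] N0 by simp
    define \<phi> where "\<phi> = (\<lambda>c::'a. (r / sqrt (1 - c \<bullet> c)) *\<^sub>R c)"
    have "A \<subseteq> \<phi> ` (N \<inter> ball 0 1)"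
    proof
      fix b assume "b \<in> A"
      hence "b /\<^sub>R sqrt (norm b ^ 2 + r ^ 2) \<in> N \<inter> ball 0 1" using phi_image(1)[OF r, of b]
        by (simp add: A_def)
      moreover have "\<phi> (b /\<^sub>R sqrt (norm b ^ 2 + r ^ 2)) = b"
        unfolding \<phi>_def using phi_image(2)[OF r, of b] by (simp only: power2_norm_eq_inner)
      ultimately show "b \<in> \<phi> ` (N \<inter> ball 0 1)" by (metis image_eqI)
    qed
    moreover have "negligible (\<phi> ` (N \<inter> ball 0 1))"
    proof (rule negligible_differentiable_image_negligible)
      show "negligible (N \<inter> ball 0 1)" using Nneg by (rule negligible_subset) auto
      show "\<phi> differentiable_on N \<inter> ball 0 1"
        unfolding \<phi>_def differentiable_on_def
      proof
        fix c :: 'a assume "c \<in> N \<inter> ball 0 1"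
        hence "norm c < 1" by simp
        hence "norm c ^ 2 < 1" by (simp add: power_less_one_iff abs_square_less_1)
        hence "0 < 1 - c \<bullet> c" by (simp add: power2_norm_eq_inner)
        thus "(\<lambda>c. (r / sqrt (1 - c \<bullet> c)) *\<^sub>R c) differentiable at c within N \<inter> ball 0 1"
          unfolding differentiable_def by (intro exI) (auto intro!: derivative_eq_intros)
      qed
    qed simp
    ultimately have "negligible A" by (rule negligible_subset[rotated])
    hence A0: "emeasure lborel A = 0" using negl_borel[of A] by simp
    have "(\<integral>\<^sup>+a. indicator ?Z (mix {j} a w) * indicator (box 0 One) (mix {j} w a) \<partial>lborel)
       \<le> (\<integral>\<^sup>+a. indicator {x::'a^'m. x$j \<in> A \<and> (\<forall>i. i \<noteq> j \<longrightarrow> x$i \<in> box 0 One)} a \<partial>lborel)"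
    proof (intro nn_integral_mono)
      fix a :: "'a^'m"
      show "indicator ?Z (mix {j} a w) * indicator (box 0 One) (mix {j} w a)
        \<le> (indicator {x::'a^'m. x$j \<in> A \<and> (\<forall>i. i \<noteq> j \<longrightarrow> x$i \<in> box 0 One)} a :: ennreal)"
      proof (cases "mix {j} a w \<in> ?Z \<and> mix {j} w a \<in> box 0 One")
        case True
        have nm: "norm (mix {j} a w) = sqrt (norm (a$j) ^ 2 + r ^ 2)"
          using norm_mix_single[of j a w] unfolding r_def by (metis norm_ge_zero real_sqrt_unique)
        have "sgn (mix {j} a w) $ j = a$j /\<^sub>R sqrt (norm (a$j) ^ 2 + r ^ 2)"
          by (simp add: sgn_div_norm nm divide_inverse_commute scaleR_conv_of_real)
        hence "a$j \<in> A" using True by (simp add: A_def)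
        moreover have "\<forall>i. i \<noteq> j \<longrightarrow> a$i \<in> box 0 One"
        proof (intro allI impI)
          fix i assume "i \<noteq> j"
          moreover have "mix {j} w a $ i \<in> box ((0::'a^'m)$i) ((One::'a^'m)$i)"
            using True mem_box_vec by blast
          ultimately show "a$i \<in> box 0 One" by (simp only: One_vec_nth mix_nth) simp
        qed
        ultimately show ?thesis using True by simp
      qed (auto split: split_indicator)
    qed
    also have "\<dots> = emeasure lborel {x::'a^'m. x$j \<in> A \<and> (\<forall>i. i \<noteq> j \<longrightarrow> x$i \<in> box 0 One)}"
      by (rule nn_integral_indicator) simp
    also have "\<dots> = 0" by (rule cyl_null[OF Ab A0])
    finally show ?thesis by simp
  qed
  have "emeasure lborel ?Z = (\<integral>\<^sup>+z. indicator ?Z z \<partial>lborel)" by simp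
  also have "\<dots> = (\<integral>\<^sup>+w. \<integral>\<^sup>+a. indicator ?Z (mix {j} a w) * indicator (box 0 One) (mix {j} w a) \<partial>lborel \<partial>lborel)"
    by (rule block_fubini) measurable
  also have "\<dots> = (\<integral>\<^sup>+w. 0 \<partial>(lborel::('a^'m) measure))"
    by (rule nn_integral_cong_AE) (use AEw inner in auto)
  finally show ?thesis by simp
qed

lemma sqrt_lip:
  assumes "a \<ge> 0" "b \<ge> 0" "\<rho> > 0"
  shows "\<bar>sqrt (a^2 + \<rho>^2) - sqrt (b^2 + \<rho>^2)\<bar> \<le> \<bar>a - b\<bar>"
proof -
  define A where "A = sqrt (a^2 + \<rho>^2)"
  define B where "B = sqrt (b^2 + \<rho>^2)"
  have A2: "A^2 = a^2 + \<rho>^2" and B2: "B^2 = b^2 + \<rho>^2" unfolding A_def B_def by (simp_all add: add_nonneg_nonneg)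
  have Aa: "A \<ge> a" unfolding A_def using assms by (intro real_le_rsqrt) simp
  have Bb: "B \<ge> b" unfolding B_def using assms by (intro real_le_rsqrt) simp
  have Ap: "A > 0" unfolding A_def using assms by (intro real_sqrt_gt_zero) (simp add: add_nonneg_pos)
  have Bp: "B > 0" unfolding B_def using assms by (intro real_sqrt_gt_zero) (simp add: add_nonneg_pos)
  have "(A - B) * (A + B) = (a - b) * (a + b)" using A2 B2 by (simp add: algebra_simps power2_eq_square)
  hence "\<bar>A - B\<bar> * (A + B) = \<bar>a - b\<bar> * (a + b)" using assms Ap Bp
    by (metis abs_mult abs_of_nonneg add_nonneg_nonneg less_imp_le)
  also have "\<dots> \<le> \<bar>a - b\<bar> * (A + B)" using Aa Bb by (intro mult_left_mono) auto
  finally have "\<bar>A - B\<bar> * (A + B) \<le> \<bar>a - b\<bar> * (A + B)" .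
  thus ?thesis unfolding A_def[symmetric] B_def[symmetric] using Ap Bp
    by (simp add: mult_le_cancel_right)
qed

lemma norm_lip:
  fixes u u' :: "'b::real_normed_vector"
  assumes \<rho>: "\<rho> > 0"
  shows "norm (u /\<^sub>R sqrt (norm u ^ 2 + \<rho>^2) - u' /\<^sub>R sqrt (norm u' ^ 2 + \<rho>^2)) \<le> 2 * norm (u - u') / \<rho>"
proof -
  define R where "R = sqrt (norm u ^ 2 + \<rho>^2)"
  define R' where "R' = sqrt (norm u' ^ 2 + \<rho>^2)"
  have R: "R \<ge> \<rho>" unfolding R_def using \<rho> by (intro real_le_rsqrt) simp
  have R': "R' \<ge> \<rho>" unfolding R'_def using \<rho> by (intro real_le_rsqrt) simp
  have u'R': "norm u' \<le> R'" unfolding R'_def using \<rho> by (intro real_le_rsqrt) simp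
  have RR: "\<bar>R - R'\<bar> \<le> norm (u - u')"
    unfolding R_def R'_def using sqrt_lip[of "norm u" "norm u'" \<rho>] \<rho> norm_triangle_ineq3[of u u']
    by simp
  have sc: "1/R - 1/R' = (R' - R) / (R * R')" using R R' \<rho> by (simp add: field_simps)
  have "u /\<^sub>R R - u' /\<^sub>R R' = (u - u') /\<^sub>R R + (1/R - 1/R') *\<^sub>R u'"
    by (simp add: scaleR_diff_right scaleR_diff_left divide_inverse)
  hence eq: "u /\<^sub>R R - u' /\<^sub>R R' = (u - u') /\<^sub>R R + ((R' - R) / (R * R')) *\<^sub>R u'"
    by (simp only: sc)
  have "norm (u /\<^sub>R R - u' /\<^sub>R R') \<le> norm ((u - u') /\<^sub>R R) + norm (((R' - R) / (R * R')) *\<^sub>R u')"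
    unfolding eq by (rule norm_triangle_ineq)
  also have "norm ((u - u') /\<^sub>R R) \<le> norm (u - u') / \<rho>"
  proof -
    have "norm ((u - u') /\<^sub>R R) = norm (u - u') / R" using R \<rho> by (simp add: divide_inverse mult.commute)
    also have "\<dots> \<le> norm (u - u') / \<rho>" using R \<rho> by (intro divide_left_mono) auto
    finally show ?thesis .
  qed
  also have "norm (((R' - R) / (R * R')) *\<^sub>R u') = \<bar>R - R'\<bar> / R * (norm u' / R')"
    using R R' \<rho> by (simp add: abs_minus_commute)
  also have "\<dots> \<le> norm (u - u') / \<rho> * 1"
  proof (intro mult_mono)
    show "\<bar>R - R'\<bar> / R \<le> norm (u - u') / \<rho>"
      using R \<rho> RR by (intro frac_le) auto
    show "norm u' / R' \<le> 1" using u'R' R' \<rho> by simp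
  qed (use R R' \<rho> in auto)
  finally show ?thesis unfolding R_def R'_def by simp
qed

lemma norm_sgn_lip:
  fixes a b :: "'b::real_normed_vector"
  assumes "b \<noteq> 0"
  shows "norm (sgn a - sgn b) \<le> 2 * norm (a - b) / norm b"
proof (cases "a = 0")
  case True thus ?thesis using assms by (simp add: norm_sgn)
next
  case False
  have sc: "1/norm a - 1/norm b = (norm b - norm a) / (norm a * norm b)" using False assms by (simp add: field_simps)
  have "sgn a - sgn b = (a - b) /\<^sub>R norm b + (1/norm a - 1/norm b) *\<^sub>R a"
    by (simp add: sgn_div_norm scaleR_diff_right scaleR_diff_left divide_inverse)
  hence eq: "sgn a - sgn b = (a - b) /\<^sub>R norm b + ((norm b - norm a) / (norm a * norm b)) *\<^sub>R a"
    by (simp only: sc)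
  have "norm (sgn a - sgn b) \<le> norm ((a - b) /\<^sub>R norm b) + norm (((norm b - norm a) / (norm a * norm b)) *\<^sub>R a)"
    unfolding eq by (rule norm_triangle_ineq)
  also have "norm ((a - b) /\<^sub>R norm b) = norm (a - b) / norm b" by (simp add: divide_inverse mult.commute)
  also have "norm (((norm b - norm a) / (norm a * norm b)) *\<^sub>R a) = \<bar>norm b - norm a\<bar> / norm b"
    using False assms by (simp add: abs_mult)
  also have "\<dots> \<le> norm (a - b) / norm b"
    using assms by (intro divide_right_mono) (auto simp: norm_triangle_ineq3 abs_minus_commute)
  finally show ?thesis by (simp only: mult_2 add_divide_distrib)
qed

lemma norm_mix_split:
  fixes a w :: "'a::real_normed_vector^'m::finite"
  shows "norm (mix K a w) ^ 2 = norm (mix K a 0) ^ 2 + norm (mix K 0 w) ^ 2"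
proof -
  have "\<And>i. norm (mix K a w $ i) ^ 2 = norm (mix K a 0 $ i) ^ 2 + norm (mix K 0 w $ i) ^ 2"
    by simp
  thus ?thesis by (simp add: norm_sq_vec[of "mix K a w"] norm_sq_vec[of "mix K a 0"]
        norm_sq_vec[of "mix K 0 w"] sum.distrib)
qed

lemma norm_bound_coords:
  fixes y :: "'a::euclidean_space^'m::finite"
  assumes "\<And>i v. v \<in> Basis \<Longrightarrow> \<bar>y$i \<bullet> v\<bar> \<le> e"
  shows "norm y \<le> real DIM('a^'m) * e"
proof -
  have "norm y \<le> (\<Sum>b\<in>Basis. \<bar>y \<bullet> b\<bar>)" by (rule norm_le_l1)
  also have "\<dots> \<le> real (card (Basis::('a^'m) set)) * e"
  proof (rule sum_bounded_above)
    fix b :: "'a^'m" assume "b \<in> Basis"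
    then obtain i v where "v \<in> Basis" "b = axis i v" by (auto simp: Basis_vec_def)
    thus "\<bar>y \<bullet> b\<bar> \<le> e" using assms by (simp add: inner_axis)
  qed
  finally show ?thesis by simp
qed

lemma coord_le_norm:
  fixes y :: "'a::euclidean_space^'m::finite"
  assumes "v \<in> Basis"
  shows "\<bar>y$i \<bullet> v\<bar> \<le> norm y"
proof -
  have "axis i v \<in> (Basis::('a^'m) set)" using assms by (auto simp: Basis_vec_def)
  hence "\<bar>y \<bullet> axis i v\<bar> \<le> norm y" by (rule Basis_le_norm)
  thus ?thesis by (simp add: inner_axis)
qed

lemma geom_point:
  fixes K :: "'m::finite set" and x :: "'a::euclidean_space" and w a c :: "'a^'m"
    and t \<alpha> \<delta> r s :: real
  assumes KU: "K \<noteq> UNIV" and Ke: "K \<noteq> {}" and x1: "norm x \<ge> 1"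
    and t_def: "t = sqrt (2 * card K) * norm x"
    and \<alpha>_def: "\<alpha> = 1 / (8 * DIM('a^'m))"
    and \<delta>_def: "\<delta> = \<alpha> / (2 * t * DIM('a^'m))"
    and w: "w \<in> box (mix K 0 (\<chi> _. \<alpha> *\<^sub>R One)) (mix K One (\<chi> _. (2*\<alpha>) *\<^sub>R One))"
    and r_def: "r = norm (mix K 0 w)"
    and s_def: "s = r / (sqrt (card K) * norm x)"
    and c_def: "c = (\<chi> _. s *\<^sub>R x)"
    and a: "a \<in> box (mix K (c - \<delta> *\<^sub>R One) 0) (mix K (c + \<delta> *\<^sub>R One) One)"
  shows "mix K a w \<in> ball 0 1 \<and> mix K a w \<noteq> 0 \<and> (\<forall>j\<in>K. norm (x - t *\<^sub>R (sgn (mix K a w) $ j)) \<le> 1)"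
    and "mix K w a \<in> box 0 One"
proof -
  let ?DD = "real DIM('a^'m)"
  have DD1: "?DD \<ge> 1" using DIM_positive[where 'a="'a^'m"]
    by (metis Suc_le_eq of_nat_1 of_nat_le_iff One_nat_def)
  have kpos: "card K \<ge> 1" using Ke by (simp add: Suc_le_eq card_gt_0_iff)
  have xpos: "norm x > 0" using x1 by linarith
  have t1: "t \<ge> 1"
  proof -
    have "sqrt (2 * card K) \<ge> 1" using kpos by simp
    thus ?thesis unfolding t_def using x1 mult_mono[of 1 "sqrt (2 * card K)" 1 "norm x"] by simp
  qed
  have \<alpha>pos: "\<alpha> > 0" unfolding \<alpha>_def by simp
  have \<alpha>8: "\<alpha> * ?DD = 1/8" unfolding \<alpha>_def using DD1 by simp
  have \<delta>pos: "\<delta> > 0" unfolding \<delta>_def using \<alpha>pos t1 DD1 by simp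
  have \<delta>DD: "\<delta> * ?DD = \<alpha> / (2 * t)" unfolding \<delta>_def using DD1 t1 by (simp add: field_simps)
  have wi: "\<And>i. w$i \<in> box ((mix K 0 (\<chi> _. \<alpha> *\<^sub>R One)) $ i) ((mix K One (\<chi> _. (2*\<alpha>) *\<^sub>R One)) $ i)"
    using w mem_box_vec by blast
  have ai: "\<And>i. a$i \<in> box ((mix K (c - \<delta> *\<^sub>R One) 0) $ i) ((mix K (c + \<delta> *\<^sub>R One) One) $ i)"
    using a mem_box_vec by blast
  have wK: "0 < w$i \<bullet> v \<and> w$i \<bullet> v < 1" if "i \<in> K" "v \<in> Basis" for i v
    using wi[of i] that by (simp add: mem_box)
  have wR: "\<alpha> < w$i \<bullet> v \<and> w$i \<bullet> v < 2 * \<alpha>" if "i \<notin> K" "v \<in> Basis" for i v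
    using wi[of i] that by (simp add: mem_box)
  have aK: "\<bar>a$i \<bullet> v - c$i \<bullet> v\<bar> < \<delta>" if "i \<in> K" "v \<in> Basis" for i v
  proof -
    have "\<forall>u\<in>Basis. c$i \<bullet> u - \<delta> < a$i \<bullet> u \<and> a$i \<bullet> u < c$i \<bullet> u + \<delta>"
      using ai[of i] that by (simp add: mem_box inner_diff_left inner_add_left)
    hence "c$i \<bullet> v - \<delta> < a$i \<bullet> v \<and> a$i \<bullet> v < c$i \<bullet> v + \<delta>" using that(2) by blast
    thus ?thesis by linarith
  qed
  have aR: "0 < a$i \<bullet> v \<and> a$i \<bullet> v < 1" if "i \<notin> K" "v \<in> Basis" for i v
    using ai[of i] that by (simp add: mem_box)
  show "mix K w a \<in> box 0 One"
    unfolding mem_box_vec by (auto simp: mem_box wK aR)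
  obtain i0 where i0: "i0 \<notin> K" using KU by blast
  obtain v0 :: 'a where v0: "v0 \<in> Basis" using nonempty_Basis by blast
  have r_gt: "r > \<alpha>"
  proof -
    have "\<alpha> < w$i0 \<bullet> v0" using wR[OF i0 v0] by simp
    also have "w$i0 \<bullet> v0 = mix K 0 w $ i0 \<bullet> v0" using i0 by simp
    also have "\<dots> \<le> \<bar>mix K 0 w $ i0 \<bullet> v0\<bar>" by simp
    also have "\<dots> \<le> r" unfolding r_def by (rule coord_le_norm[OF v0])
    finally show ?thesis .
  qed
  have r_le: "r \<le> 1/4"
  proof -
    have "r \<le> ?DD * (2 * \<alpha>)" unfolding r_def
    proof (rule norm_bound_coords)
      fix i and v :: 'a assume v: "v \<in> Basis"
      show "\<bar>mix K 0 w $ i \<bullet> v\<bar> \<le> 2 * \<alpha>"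
        using wR[of i v] v \<alpha>pos by (cases "i \<in> K") auto
    qed
    thus ?thesis using \<alpha>8 by (simp add: algebra_simps)
  qed
  have rpos: "r > 0" using r_gt \<alpha>pos by simp
  let ?cK = "mix K c 0"
  let ?aK = "mix K a 0"
  let ?rw = "mix K 0 w"
  have ncK: "norm ?cK = r"
  proof -
    have "norm ?cK ^ 2 = (\<Sum>i\<in>UNIV. if i \<in> K then (s * norm x) ^ 2 else 0)"
      by (subst norm_sq_vec) (auto simp: c_def power_mult_distrib intro!: sum.cong)
    also have "\<dots> = card K * (s * norm x) ^ 2" by (simp add: sum.If_cases)
    also have "\<dots> = r ^ 2" unfolding s_def using xpos kpos Ke
      by (simp add: power_divide power_mult_distrib)
    finally show ?thesis using rpos
      by (metis norm_ge_zero power2_eq_imp_eq less_imp_le)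
  qed
  have dist_ac: "norm (?aK - ?cK) \<le> \<alpha> / (2 * t)"
  proof -
    have "norm (?aK - ?cK) \<le> ?DD * \<delta>"
    proof (rule norm_bound_coords)
      fix i and v :: 'a assume v: "v \<in> Basis"
      show "\<bar>(?aK - ?cK) $ i \<bullet> v\<bar> \<le> \<delta>"
        using aK[of i v] v \<delta>pos by (cases "i \<in> K") (auto simp: inner_diff_left)
    qed
    thus ?thesis using \<delta>DD by (simp add: mult.commute)
  qed
  have \<alpha>t: "\<alpha> / (2 * t) \<le> 1/16"
  proof -
    have "\<alpha> \<le> 1/8" using \<alpha>8 DD1 \<alpha>pos proof -
      have "\<alpha> * 1 \<le> \<alpha> * ?DD" using DD1 \<alpha>pos by (intro mult_left_mono) auto
      thus ?thesis using \<alpha>8 by linarith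
    qed
    thus ?thesis using t1 \<alpha>pos by (simp add: field_simps)
  qed
  let ?z = "mix K a w"
  have nz: "norm ?z = sqrt (norm ?aK ^ 2 + r ^ 2)"
    using norm_mix_split[of K a w] unfolding r_def by (metis norm_ge_zero real_sqrt_unique)
  have naK: "norm ?aK \<le> r + 1/16"
    using norm_triangle_ineq2[of ?aK ?cK] dist_ac \<alpha>t ncK by linarith
  show "?z \<in> ball 0 1 \<and> ?z \<noteq> 0 \<and> (\<forall>j\<in>K. norm (x - t *\<^sub>R (sgn ?z $ j)) \<le> 1)"
  proof (intro conjI ballI)
    have "norm ?aK ^ 2 + r ^ 2 \<le> (r + 1/16) ^ 2 + r ^ 2"
      using naK by (simp add: power_mono)
    also have "\<dots> < 1"
    proof -
      have "(r + 1/16) * (r + 1/16) \<le> (5/16) * (5/16)" by (rule mult_mono) (use r_le rpos in auto)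
      moreover have "r * r \<le> (1/4) * (1/4)" by (rule mult_mono) (use r_le rpos in auto)
      ultimately show ?thesis by (simp add: power2_eq_square)
    qed
    finally have "norm ?aK ^ 2 + r ^ 2 < 1" .
    thus "?z \<in> ball 0 1" by (simp add: nz real_sqrt_lt_1_iff)
    have "norm ?z \<ge> r" unfolding nz by (intro real_le_rsqrt) simp
    thus "?z \<noteq> 0" using rpos by auto
  next
    fix j assume j: "j \<in> K"
    have sgnz: "sgn ?z $ j = (?aK /\<^sub>R sqrt (norm ?aK ^ 2 + r ^ 2)) $ j"
      using j by (simp add: sgn_div_norm nz)
    have cen: "(?cK /\<^sub>R sqrt (norm ?cK ^ 2 + r ^ 2)) $ j = (1 / t) *\<^sub>R x"
    proof -
      have "sqrt (norm ?cK ^ 2 + r ^ 2) = sqrt (2 * r^2)" using ncK by simp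
      also have "\<dots> = sqrt 2 * r" using rpos by (simp add: real_sqrt_mult)
      finally have sq: "sqrt (norm ?cK ^ 2 + r ^ 2) = sqrt 2 * r" .
      moreover have "s / (sqrt 2 * r) = 1 / t"
        unfolding s_def t_def using rpos xpos kpos by (simp add: real_sqrt_mult field_simps)
      moreover have "(?cK /\<^sub>R sqrt (norm ?cK ^ 2 + r ^ 2)) $ j = (s / (sqrt 2 * r)) *\<^sub>R x"
        unfolding sq using j by (simp add: c_def divide_inverse mult.commute)
      ultimately show ?thesis by simp
    qed
    have "norm ((?aK /\<^sub>R sqrt (norm ?aK ^ 2 + r ^ 2)) - (?cK /\<^sub>R sqrt (norm ?cK ^ 2 + r ^ 2)))
        \<le> 2 * norm (?aK - ?cK) / r" by (rule norm_lip[OF rpos])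
    also have "\<dots> \<le> 2 * (\<alpha> / (2 * t)) / \<alpha>"
      using dist_ac r_gt \<alpha>pos rpos t1 by (intro frac_le) auto
    also have "\<dots> = 1 / t" using \<alpha>pos t1 by simp
    finally have "norm (sgn ?z $ j - (1/t) *\<^sub>R x) \<le> 1/t"
      using Finite_Cartesian_Product.norm_nth_le[where x="(?aK /\<^sub>R sqrt (norm ?aK ^ 2 + r ^ 2)) - (?cK /\<^sub>R sqrt (norm ?cK ^ 2 + r ^ 2))" and i=j]
      unfolding sgnz cen[symmetric] by simp
    hence "t * norm (sgn ?z $ j - (1/t) *\<^sub>R x) \<le> 1" using t1 by (simp add: field_simps)
    moreover have "t * norm (sgn ?z $ j - (1/t) *\<^sub>R x) = norm (x - t *\<^sub>R (sgn ?z $ j))"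
    proof -
      have "t * norm (sgn ?z $ j - (1/t) *\<^sub>R x) = norm (t *\<^sub>R (sgn ?z $ j - (1/t) *\<^sub>R x))"
        using t1 by simp
      also have "t *\<^sub>R (sgn ?z $ j - (1/t) *\<^sub>R x) = t *\<^sub>R (sgn ?z $ j) - x"
        using t1 by (simp add: scaleR_diff_right)
      finally show ?thesis by (simp add: norm_minus_commute)
    qed
    ultimately show "norm (x - t *\<^sub>R (sgn ?z $ j)) \<le> 1" by simp
  qed
qed

lemma prod_if_const:
  fixes X :: real
  shows "(\<Prod>i\<in>(UNIV::'m::finite set). \<Prod>v\<in>(Basis::'a::euclidean_space set). if i \<in> K then X else 1) = (X ^ DIM('a)) ^ card K"
proof -
  have "(\<Prod>i\<in>(UNIV::'m set). \<Prod>v\<in>(Basis::'a set). if i \<in> K then X else 1) = (\<Prod>i\<in>(UNIV::'m set). if i \<in> K then X ^ DIM('a) else 1)"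
    by (intro prod.cong) auto
  also have "\<dots> = (X ^ DIM('a)) ^ card K" by (simp add: prod.If_cases)
  finally show ?thesis .
qed

lemma lower_Z_notall:
  fixes K :: "'m::finite set" and x :: "'a::euclidean_space" and t \<alpha> \<delta> :: real
  assumes KU: "K \<noteq> UNIV" and Ke: "K \<noteq> {}" and x1: "norm x \<ge> 1"
  defines "t \<equiv> sqrt (2 * card K) * norm x"
  defines "\<alpha> \<equiv> 1 / (8 * DIM('a^'m))"
  defines "\<delta> \<equiv> \<alpha> / (2 * t * DIM('a^'m))"
  shows "emeasure lborel {z::'a^'m. z \<in> ball 0 1 \<and> z \<noteq> 0 \<and> (\<forall>j\<in>K. norm (x - t *\<^sub>R (sgn z $ j)) \<le> 1)}
    \<ge> ennreal ((\<Prod>i\<in>(UNIV::'m set). \<Prod>v\<in>(Basis::'a set). if i \<in> K then 1 else \<alpha>) * ((2 * \<delta>) ^ DIM('a)) ^ card K)"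
proof -
  let ?Z = "{z::'a^'m. z \<in> ball 0 1 \<and> z \<noteq> 0 \<and> (\<forall>j\<in>K. norm (x - t *\<^sub>R (sgn z $ j)) \<le> 1)}"
  let ?L = "mix K 0 (\<chi> _. \<alpha> *\<^sub>R One) :: 'a^'m"
  let ?U = "mix K One (\<chi> _. (2*\<alpha>) *\<^sub>R One) :: 'a^'m"
  have \<alpha>pos: "\<alpha> > 0" unfolding \<alpha>_def by simp
  have kpos: "card K \<ge> 1" using Ke by (simp add: Suc_le_eq card_gt_0_iff)
  have tpos: "t > 0" unfolding t_def using kpos x1 by (intro mult_pos_pos) auto
  have \<delta>pos: "\<delta> > 0" unfolding \<delta>_def using \<alpha>pos tpos by simp
  have Zb[measurable]: "?Z \<in> sets borel" by measurable
  have inner: "(\<integral>\<^sup>+a. indicator ?Z (mix K a w) * indicator (box 0 One) (mix K w a) \<partial>lborel)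
      \<ge> ennreal (((2 * \<delta>) ^ DIM('a)) ^ card K)" if w: "w \<in> box ?L ?U" for w
  proof -
    define r where "r = norm (mix K 0 w)"
    define s where "s = r / (sqrt (card K) * norm x)"
    define c where "c = (\<chi> _::'m. s *\<^sub>R x)"
    let ?L' = "mix K (c - \<delta> *\<^sub>R One) 0" and ?U' = "mix K (c + \<delta> *\<^sub>R One) One"
    have "(\<integral>\<^sup>+a. indicator ?Z (mix K a w) * indicator (box 0 One) (mix K w a) \<partial>lborel)
       \<ge> (\<integral>\<^sup>+a. indicator (box ?L' ?U') a \<partial>lborel)"
    proof (intro nn_integral_mono)
      fix a :: "'a^'m"
      show "indicator (box ?L' ?U') a \<le> indicator ?Z (mix K a w) * (indicator (box 0 One) (mix K w a) :: ennreal)"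
      proof (cases "a \<in> box ?L' ?U'")
        case True
        note g = geom_point[OF KU Ke x1 meta_eq_to_obj_eq[OF t_def] meta_eq_to_obj_eq[OF \<alpha>_def] meta_eq_to_obj_eq[OF \<delta>_def] w r_def s_def c_def True]
        show ?thesis using g by (simp split: split_indicator)
      qed simp
    qed
    also have "(\<integral>\<^sup>+a. indicator (box ?L' ?U') a \<partial>lborel) = emeasure lborel (box ?L' ?U')" by simp
    also have "\<dots> = ennreal (\<Prod>i\<in>UNIV. \<Prod>v\<in>Basis. (?U'$i - ?L'$i) \<bullet> v)"
      by (rule emeasure_box_vec) (use \<delta>pos in \<open>auto simp: inner_diff_left inner_add_left\<close>)
    also have "(\<Prod>i\<in>UNIV. \<Prod>v\<in>Basis. (?U'$i - ?L'$i) \<bullet> v) = (\<Prod>i\<in>(UNIV::'m set). \<Prod>v\<in>(Basis::'a set). if i \<in> K then 2 * \<delta> else 1)"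
      by (intro prod.cong refl) (auto simp: inner_diff_left inner_add_left)
    also have "\<dots> = ((2 * \<delta>) ^ DIM('a)) ^ card K" by (rule prod_if_const)
    finally show ?thesis .
  qed
  have "emeasure lborel ?Z = (\<integral>\<^sup>+z. indicator ?Z z \<partial>lborel)" by simp
  also have "\<dots> = (\<integral>\<^sup>+w. \<integral>\<^sup>+a. indicator ?Z (mix K a w) * indicator (box 0 One) (mix K w a) \<partial>lborel \<partial>lborel)"
    by (rule block_fubini) measurable
  also have "\<dots> \<ge> (\<integral>\<^sup>+w. indicator (box ?L ?U) w * ennreal (((2 * \<delta>) ^ DIM('a)) ^ card K) \<partial>lborel)"
    by (intro nn_integral_mono) (use inner in \<open>auto split: split_indicator\<close>)
  moreover have "(\<integral>\<^sup>+w. indicator (box ?L ?U) w * ennreal (((2 * \<delta>) ^ DIM('a)) ^ card K) \<partial>lborel)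
     = emeasure lborel (box ?L ?U) * ennreal (((2 * \<delta>) ^ DIM('a)) ^ card K)"
    by (subst nn_integral_multc) auto
  moreover have "emeasure lborel (box ?L ?U) = ennreal (\<Prod>i\<in>(UNIV::'m set). \<Prod>v\<in>(Basis::'a set). if i \<in> K then 1 else \<alpha>)"
  proof -
    have "emeasure lborel (box ?L ?U) = ennreal (\<Prod>i\<in>UNIV. \<Prod>v\<in>Basis. (?U$i - ?L$i) \<bullet> v)"
      by (rule emeasure_box_vec) (use \<alpha>pos in \<open>auto simp: inner_diff_left\<close>)
    also have "(\<Prod>i\<in>UNIV. \<Prod>v\<in>Basis. (?U$i - ?L$i) \<bullet> v) = (\<Prod>i\<in>(UNIV::'m set). \<Prod>v\<in>(Basis::'a set). if i \<in> K then 1 else \<alpha>)"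
      by (intro prod.cong refl) (auto simp: inner_diff_left)
    finally show ?thesis .
  qed
  ultimately show ?thesis using \<alpha>pos \<delta>pos
    by (simp add: ennreal_mult'[symmetric] prod_nonneg)
qed

lemma lower_Z_all:
  fixes x :: "'a::euclidean_space" and t :: real
  assumes x1: "norm x \<ge> 1"
  defines "t \<equiv> sqrt (CARD('m::finite)) * norm x"
  shows "emeasure lborel {z::'a^'m. z \<in> ball 0 1 \<and> z \<noteq> 0 \<and> (\<forall>j\<in>UNIV. norm (x - t *\<^sub>R (sgn z $ j)) \<le> 1)}
    \<ge> ennreal (unit_ball_vol DIM('a^'m) * (1 / (4 * t)) ^ DIM('a^'m))"
proof -
  have m1: "real CARD('m) \<ge> 1" by (simp add: Suc_le_eq)
  have x0: "x \<noteq> 0" using x1 by (metis norm_zero not_one_le_zero)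
  have t1: "t \<ge> 1" unfolding t_def using x1 m1 mult_mono[of 1 "sqrt (CARD('m))" 1 "norm x"] by simp
  define w0 where "w0 = (\<chi> j::'m. (1/t) *\<^sub>R x)"
  define z0 where "z0 = (1/2::real) *\<^sub>R w0"
  define \<delta> where "\<delta> = 1 / (4 * t)"
  have \<delta>pos: "\<delta> > 0" unfolding \<delta>_def using t1 by simp
  have \<delta>4: "\<delta> \<le> 1/4" unfolding \<delta>_def using t1 by (simp add: field_simps)
  have nw0: "norm w0 = 1"
  proof -
    have "norm w0 ^ 2 = CARD('m) * (norm x / t) ^ 2"
      using t1 by (subst norm_sq_vec) (simp add: w0_def divide_inverse mult.commute)
    also have "\<dots> = 1" unfolding t_def using x1 m1 x0 by (simp add: power_divide power_mult_distrib)
    finally have "norm w0 ^ 2 = 1" .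
    thus ?thesis using norm_ge_zero[of w0] by (auto simp: power2_eq_1_iff)
  qed
  have nz0: "norm z0 = 1/2" unfolding z0_def using nw0 by simp
  have sz0: "sgn z0 = w0" unfolding z0_def using nw0 by (simp add: sgn_div_norm)
  have "ball z0 \<delta> \<subseteq> {z::'a^'m. z \<in> ball 0 1 \<and> z \<noteq> 0 \<and> (\<forall>j\<in>UNIV. norm (x - t *\<^sub>R (sgn z $ j)) \<le> 1)}"
  proof (intro subsetI CollectI conjI ballI)
    fix z assume z: "z \<in> ball z0 \<delta>"
    hence dz: "norm (z - z0) < \<delta>" by (simp add: dist_norm norm_minus_commute)
    have "norm z \<le> norm z0 + norm (z - z0)" by (rule norm_triangle_sub)
    thus "z \<in> ball 0 1" using nz0 dz \<delta>4 by simp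
    have "norm z0 \<le> norm z + norm (z - z0)" using norm_triangle_sub[of z0 z] by (simp add: norm_minus_commute)
    thus "z \<noteq> 0" using nz0 dz \<delta>4 by auto
    fix j
    have "norm (sgn z - w0) \<le> 2 * norm (z - z0) / norm z0"
    proof -
      have z0ne: "z0 \<noteq> 0" using nz0 by auto
      show ?thesis using norm_sgn_lip[OF z0ne, of z] unfolding sz0 .
    qed
    also have "\<dots> = 4 * norm (z - z0)" unfolding nz0 by simp
    also have "\<dots> \<le> 4 * \<delta>" using dz by simp
    also have "\<dots> = 1 / t" unfolding \<delta>_def using t1 by simp
    finally have nd: "norm (sgn z - w0) \<le> 1 / t" .
    have "x - t *\<^sub>R (sgn z $ j) = t *\<^sub>R ((w0 - sgn z) $ j)"
      using t1 by (simp add: w0_def scaleR_diff_right)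
    hence "norm (x - t *\<^sub>R (sgn z $ j)) = t * norm ((w0 - sgn z) $ j)" using t1 by simp
    also have "\<dots> \<le> t * norm (w0 - sgn z)"
      using t1 Finite_Cartesian_Product.norm_nth_le[of "w0 - sgn z" j] by (intro mult_left_mono) auto
    also have "\<dots> \<le> t * (1 / t)" using nd t1 by (intro mult_left_mono) (auto simp: norm_minus_commute)
    also have "\<dots> = 1" using t1 by simp
    finally show "norm (x - t *\<^sub>R (sgn z $ j)) \<le> 1" .
  qed
  hence "emeasure lborel (ball z0 \<delta>) \<le> emeasure lborel {z::'a^'m. z \<in> ball 0 1 \<and> z \<noteq> 0 \<and> (\<forall>j\<in>UNIV. norm (x - t *\<^sub>R (sgn z $ j)) \<le> 1)}"
    by (intro emeasure_mono) measurable
  moreover have "emeasure lborel (ball z0 \<delta>) = ennreal (unit_ball_vol DIM('a^'m) * \<delta> ^ DIM('a^'m))"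
    using \<delta>pos by (intro emeasure_ball) simp
  ultimately show ?thesis unfolding \<delta>_def by simp
qed

lemma lower_Z:
  fixes K :: "'m::finite set"
  assumes Ke: "K \<noteq> {}"
  shows "\<exists>c>0. \<forall>x::'a::euclidean_space. norm x \<ge> 1 \<longrightarrow> (\<exists>t>0. ennreal (c / norm x ^ (card K * DIM('a)))
     \<le> emeasure lborel {z::'a^'m. z \<in> ball 0 1 \<and> z \<noteq> 0 \<and> (\<forall>j\<in>K. norm (x - t *\<^sub>R (sgn z $ j)) \<le> 1)})"
proof (cases "K = UNIV")
  case True
  let ?D = "DIM('a^'m)"
  define c where "c = unit_ball_vol ?D * (1 / (4 * sqrt (CARD('m)))) ^ ?D"
  have cpos: "c > 0" unfolding c_def by simp
  show ?thesis
  proof (rule exI[of _ c], intro conjI allI impI cpos)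
    fix x :: 'a assume x1: "norm x \<ge> 1"
    define t where "t = sqrt (CARD('m)) * norm x"
    have tpos: "t > 0" unfolding t_def using x1 by (intro mult_pos_pos) auto
    have "c / norm x ^ (card K * DIM('a)) = unit_ball_vol ?D * (1 / (4 * t)) ^ ?D"
      unfolding c_def t_def True using x1 by (simp add: power_divide power_mult_distrib field_simps)
    thus "\<exists>t>0. ennreal (c / norm x ^ (card K * DIM('a)))
       \<le> emeasure lborel {z::'a^'m. z \<in> ball 0 1 \<and> z \<noteq> 0 \<and> (\<forall>j\<in>K. norm (x - t *\<^sub>R (sgn z $ j)) \<le> 1)}"
      using lower_Z_all[OF x1, where 'm='m] tpos unfolding True t_def by auto
  qed
next
  case False
  let ?D = "DIM('a^'m)"
  define \<alpha> where "\<alpha> = 1 / (8 * ?D)"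
  define cL where "cL = (\<Prod>i\<in>(UNIV::'m set). \<Prod>v\<in>(Basis::'a set). if i \<in> K then 1 else \<alpha>)"
  define A where "A = \<alpha> / (?D * sqrt (2 * card K))"
  define c where "c = cL * (A ^ DIM('a)) ^ card K"
  have kpos: "card K \<ge> 1" using Ke by (simp add: Suc_le_eq card_gt_0_iff)
  have \<alpha>pos: "\<alpha> > 0" unfolding \<alpha>_def by simp
  have cLpos: "cL > 0" unfolding cL_def using \<alpha>pos by (intro prod_pos) auto
  have Apos: "A > 0" unfolding A_def using \<alpha>pos kpos by (intro divide_pos_pos mult_pos_pos) auto
  have cpos: "c > 0" unfolding c_def using cLpos Apos by simp
  show ?thesis
  proof (rule exI[of _ c], intro conjI allI impI cpos)
    fix x :: 'a assume x1: "norm x \<ge> 1"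
    define t where "t = sqrt (2 * card K) * norm x"
    define \<delta> where "\<delta> = \<alpha> / (2 * t * ?D)"
    have tpos: "t > 0" unfolding t_def using x1 kpos by (intro mult_pos_pos) auto
    have "2 * \<delta> = A / norm x" unfolding \<delta>_def A_def t_def using x1 by (simp add: field_simps)
    hence "c / norm x ^ (card K * DIM('a)) = cL * ((2 * \<delta>) ^ DIM('a)) ^ card K"
      unfolding c_def using x1 by (simp add: power_divide power_mult[symmetric] mult.commute)
    thus "\<exists>t>0. ennreal (c / norm x ^ (card K * DIM('a)))
       \<le> emeasure lborel {z::'a^'m. z \<in> ball 0 1 \<and> z \<noteq> 0 \<and> (\<forall>j\<in>K. norm (x - t *\<^sub>R (sgn z $ j)) \<le> 1)}"
      using lower_Z_notall[OF False Ke x1] tpos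
      unfolding t_def[symmetric] \<alpha>_def[symmetric] \<delta>_def[symmetric] cL_def[symmetric] by auto
  qed
qed

lemma ball_borel[measurable]: "ball (c::'a::euclidean_space) r \<in> sets borel"
  by simp

lemma space_sphere[simp]: "space (sphere_measure :: 'a::euclidean_space measure) = UNIV"
  by (simp add: sphere_measure_def)

lemma sets_sphere[simp, measurable_cong]: "sets (sphere_measure :: 'a::euclidean_space measure) = sets borel"
  by (simp add: sphere_measure_def)

lemma sphere_nn_integral:
  fixes g :: "'a::euclidean_space \<Rightarrow> ennreal"
  assumes [measurable]: "g \<in> borel_measurable borel"
  shows "(\<integral>\<^sup>+y. g y \<partial>sphere_measure) = (\<integral>\<^sup>+z. of_nat DIM('a) * (indicator (ball 0 1) z * g (sgn z)) \<partial>lborel)"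
proof -
  have "(\<integral>\<^sup>+y. g y \<partial>sphere_measure) =
    (\<integral>\<^sup>+y. of_nat DIM('a) * g y \<partial>distr (density lborel (indicator (ball (0::'a) 1))) borel sgn)"
    unfolding sphere_measure_def by (subst nn_integral_density) auto
  also have "\<dots> = (\<integral>\<^sup>+z. of_nat DIM('a) * g (sgn z) \<partial>density lborel (indicator (ball (0::'a) 1)))"
    by (subst nn_integral_distr) auto
  also have "\<dots> = (\<integral>\<^sup>+z. indicator (ball 0 1) z * (of_nat DIM('a) * g (sgn z)) \<partial>lborel)"
    by (subst nn_integral_density) auto
  finally show ?thesis by (simp add: ac_simps)
qed

lemma sphere_total:
  "emeasure (sphere_measure :: 'a::euclidean_space measure) UNIV
     = ennreal (real DIM('a) * measure lborel (ball (0::'a) 1))"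
proof -
  have "emeasure (sphere_measure :: 'a measure) UNIV = (\<integral>\<^sup>+y. 1 \<partial>(sphere_measure :: 'a measure))"
    by simp
  also have "\<dots> = (\<integral>\<^sup>+z. of_nat DIM('a) * indicator (ball (0::'a) 1) z \<partial>lborel)"
    by (subst sphere_nn_integral) auto
  also have "\<dots> = of_nat DIM('a) * emeasure lborel (ball (0::'a) 1)"
    by (subst nn_integral_cmult) auto
  also have "emeasure lborel (ball (0::'a) 1) = ennreal (measure lborel (ball (0::'a) 1))"
    using emeasure_lborel_ball_finite[of "0::'a" 1] by (intro emeasure_eq_ennreal_measure) auto
  finally show ?thesis by (simp add: ennreal_mult' ennreal_of_nat_eq_real_of_nat)
qed

lemma finite_sphere: "finite_measure (sphere_measure :: 'a::euclidean_space measure)"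
  by (rule finite_measureI) (simp add: sphere_total)

lemma enn_powr_mono:
  assumes "a \<le> b" "r > 0"
  shows "enn_powr a r \<le> enn_powr b r"
proof (cases "b = \<infinity>")
  case False
  hence "a \<noteq> \<infinity>" using assms by (auto simp: top_unique)
  moreover have "enn2real a \<le> enn2real b" using assms False by (simp add: enn2real_mono top.not_eq_extremum)
  ultimately show ?thesis using False assms
    by (simp add: enn_powr_def powr_mono2 ennreal_leI)
qed (simp add: enn_powr_def)

lemma enn_powr_ennreal: "x \<ge> 0 \<Longrightarrow> enn_powr (ennreal x) r = ennreal (x powr r)"
  by (simp add: enn_powr_def)

lemma divergence:
  "(\<integral>\<^sup>+x. indicator {x::'a::euclidean_space. 1 \<le> norm x} x * ennreal (1 / norm x ^ DIM('a)) \<partial>lborel) = \<infinity>"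
proof -
  let ?d = "DIM('a)"
  let ?V = "unit_ball_vol ?d"
  let ?F = "\<lambda>x::'a. indicator {x::'a. 1 \<le> norm x} x * ennreal (1 / norm x ^ ?d)"
  define \<epsilon> where "\<epsilon> = ?V * (1 - 1 / 2 ^ ?d)"
  have Vpos: "?V > 0" by simp
  have \<epsilon>pos: "\<epsilon> > 0" unfolding \<epsilon>_def using Vpos by (simp add: DIM_positive)
  define S where "S = (\<lambda>N::nat. {x::'a. 2^N \<le> norm x \<and> norm x < 2^(Suc N)})"
  define T where "T = (\<lambda>N::nat. {x::'a. 1 \<le> norm x \<and> norm x < 2^N})"
  have Sb[measurable]: "\<And>N. S N \<in> sets borel" unfolding S_def by measurable
  have Tb[measurable]: "\<And>N. T N \<in> sets borel" unfolding T_def by measurable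
  have shell: "(\<integral>\<^sup>+x. ?F x * indicator (S N) x \<partial>lborel) \<ge> ennreal \<epsilon>" for N
  proof -
    have "(\<integral>\<^sup>+x. ?F x * indicator (S N) x \<partial>lborel) \<ge> (\<integral>\<^sup>+x. ennreal (1 / (2^Suc N) ^ ?d) * indicator (S N) x \<partial>lborel)"
    proof (intro nn_integral_mono)
      fix x :: 'a
      show "ennreal (1 / (2^Suc N) ^ ?d) * indicator (S N) x \<le> ?F x * indicator (S N) x"
      proof (cases "x \<in> S N")
        case True
        hence x: "2^N \<le> norm x" "norm x < 2^Suc N" by (auto simp: S_def)
        have "1 \<le> norm x" using x(1) by (metis one_le_power one_le_numeral order.trans)
        moreover have "1 / (2^Suc N) ^ ?d \<le> 1 / norm x ^ ?d"
          using x \<open>1 \<le> norm x\<close> by (intro divide_left_mono power_mono) (auto intro!: mult_pos_pos zero_less_power)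
        ultimately show ?thesis using True by (auto intro: ennreal_leI)
      qed simp
    qed
    also have "(\<integral>\<^sup>+x. ennreal (1 / (2^Suc N) ^ ?d) * indicator (S N) x \<partial>lborel) = ennreal (1 / (2^Suc N) ^ ?d) * emeasure lborel (S N)"
      by (subst nn_integral_cmult) auto
    also have "emeasure lborel (S N) = ennreal (?V * (2^Suc N) ^ ?d - ?V * (2^N) ^ ?d)"
    proof -
      have eq: "S N = ball 0 (2^Suc N) - ball 0 (2^N)" by (auto simp: S_def)
      have "emeasure lborel (S N) = emeasure lborel (ball (0::'a) (2^Suc N)) - emeasure lborel (ball (0::'a) (2^N))"
      proof -
        have sub: "ball (0::'a) (2^N) \<subseteq> ball 0 (2^Suc N)" by (intro subset_ball) simp
        show ?thesis unfolding eq using emeasure_lborel_ball_finite[of "0::'a" "2^N"]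
          by (intro emeasure_Diff[OF _ _ _ sub]) (auto simp: less_top[symmetric])
      qed
      also have "\<dots> = ennreal (?V * (2^Suc N) ^ ?d) - ennreal (?V * (2^N) ^ ?d)"
        by (simp add: emeasure_ball)
      also have "\<dots> = ennreal (?V * (2^Suc N) ^ ?d - ?V * (2^N) ^ ?d)"
        by (rule ennreal_minus) simp
      finally show ?thesis .
    qed
    also have "ennreal (1 / (2^Suc N) ^ ?d) * ennreal (?V * (2^Suc N) ^ ?d - ?V * (2^N) ^ ?d) = ennreal \<epsilon>"
    proof -
      have "?V * (2^N) ^ ?d \<le> ?V * (2^Suc N) ^ ?d" using Vpos by (intro mult_left_mono power_mono) auto
      hence "ennreal (1 / (2^Suc N) ^ ?d) * ennreal (?V * (2^Suc N) ^ ?d - ?V * (2^N) ^ ?d)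
         = ennreal (1 / (2^Suc N) ^ ?d * (?V * (2^Suc N) ^ ?d - ?V * (2^N) ^ ?d))"
        by (subst ennreal_mult) auto
      also have "1 / (2^Suc N) ^ ?d * (?V * (2^Suc N) ^ ?d - ?V * (2^N) ^ ?d) = \<epsilon>"
        unfolding \<epsilon>_def by (simp add: field_simps power_mult_distrib[symmetric] power_mult[symmetric] mult.commute)
      finally show ?thesis .
    qed
    finally show ?thesis .
  qed
  have Tbound: "(\<integral>\<^sup>+x. ?F x * indicator (T N) x \<partial>lborel) \<ge> of_nat N * ennreal \<epsilon>" for N
  proof (induction N)
    case 0 thus ?case by simp
  next
    case (Suc N)
    have "indicator (T (Suc N)) x = (indicator (T N) x + indicator (S N) x :: ennreal)" for x :: 'a
    proof -
      have h: "1 \<le> norm y" if "2^N \<le> norm y" for y :: 'a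
        using that one_le_power[of "2::real" N] by linarith
      show ?thesis by (auto simp: T_def S_def h split: split_indicator)
    qed
    hence "(\<integral>\<^sup>+x. ?F x * indicator (T (Suc N)) x \<partial>lborel)
        = (\<integral>\<^sup>+x. ?F x * indicator (T N) x + ?F x * indicator (S N) x \<partial>lborel)"
      by (simp add: distrib_left)
    also have "\<dots> = (\<integral>\<^sup>+x. ?F x * indicator (T N) x \<partial>lborel) + (\<integral>\<^sup>+x. ?F x * indicator (S N) x \<partial>lborel)"
      by (rule nn_integral_add) auto
    also have "\<dots> \<ge> of_nat N * ennreal \<epsilon> + ennreal \<epsilon>"
      using Suc.IH shell[of N] by (intro add_mono) auto
    moreover have "of_nat N * ennreal \<epsilon> + ennreal \<epsilon> = of_nat (Suc N) * ennreal \<epsilon>"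
      by (simp add: distrib_right)
    ultimately show ?case by simp
  qed
  show ?thesis
  proof (rule ccontr)
    assume "(\<integral>\<^sup>+x. ?F x \<partial>lborel) \<noteq> \<infinity>"
    then obtain R where R: "(\<integral>\<^sup>+x. ?F x \<partial>lborel) = ennreal R" "R \<ge> 0"
      by (cases "(\<integral>\<^sup>+x. ?F x \<partial>lborel)" rule: ennreal_cases) auto
    obtain N :: nat where N: "R / \<epsilon> < N" using reals_Archimedean2 by blast
    have "of_nat N * ennreal \<epsilon> \<le> (\<integral>\<^sup>+x. ?F x * indicator (T N) x \<partial>lborel)" by (rule Tbound)
    also have "\<dots> \<le> (\<integral>\<^sup>+x. ?F x \<partial>lborel)"
      by (intro nn_integral_mono) (auto split: split_indicator)
    finally have "ennreal (N * \<epsilon>) \<le> ennreal R" using R \<epsilon>pos by (simp add: ennreal_mult ennreal_of_nat_eq_real_of_nat)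
    hence "N * \<epsilon> \<le> R" using R by (simp add: ennreal_le_iff)
    moreover have "R < N * \<epsilon>" using N \<epsilon>pos by (simp add: field_simps)
    ultimately show False by simp
  qed
qed

lemma ess_sup_AE:
  fixes g :: "'a::euclidean_space \<Rightarrow> ennreal"
  assumes "g \<in> borel_measurable borel"
  shows "AE x in lborel. g x \<le> ess_sup_enn g"
proof -
  have "esssup lborel g = ess_sup_enn g" unfolding ess_sup_enn_def
    by (rule esssup_eq_AE) (use assms in simp)
  thus ?thesis using esssup_AE[where M=lborel and f=g] by simp
qed

lemma ess_sup_le: "(\<And>x. g x \<le> c) \<Longrightarrow> ess_sup_enn g \<le> c"
  unfolding ess_sup_enn_def by (rule Inf_lower) (auto intro: AE_I2)

lemma affine_null:
  fixes N :: "'a::euclidean_space set"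
  assumes [measurable]: "N \<in> sets borel" and N0: "emeasure lborel N = 0" and t: "t \<noteq> 0"
  shows "emeasure lborel {b. x - t *\<^sub>R b \<in> N} = 0"
proof -
  have pre: "(\<lambda>b. x + (-t) *\<^sub>R b) -` N = {b. x - t *\<^sub>R b \<in> N}" by auto
  have "emeasure lborel N = emeasure (density (distr lborel borel (\<lambda>b. x + (-t) *\<^sub>R b)) (\<lambda>_. \<bar>-t\<bar> ^ DIM('a))) N"
    using lborel_affine[of "-t" x] t by simp
  also have "\<dots> = ennreal (\<bar>-t\<bar> ^ DIM('a)) * emeasure (distr lborel borel (\<lambda>b. x + (-t) *\<^sub>R b)) N"
    by (subst emeasure_density) (auto simp: nn_integral_cmult_indicator)
  also have "emeasure (distr lborel borel (\<lambda>b. x + (-t) *\<^sub>R b)) N = emeasure lborel {b. x - t *\<^sub>R b \<in> N}"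
    by (subst emeasure_distr) (auto simp: vimage_def)
  finally show ?thesis using N0 t by (simp add: ennreal_mult_eq_top_iff)
qed

lemma sphere_coord_null:
  fixes N :: "'a::euclidean_space set" and j :: "'m::finite"
  assumes [measurable]: "N \<in> sets borel" and N0: "emeasure lborel N = 0" and m2: "CARD('m) \<ge> 2"
  shows "AE y in (sphere_measure :: ('a^'m) measure). y $ j \<notin> N"
proof -
  let ?Z = "{z::'a^'m. z \<noteq> 0 \<and> sgn z $ j \<in> N}"
  have Znull: "?Z \<in> null_sets lborel" using sphere_null[OF _ N0 m2, of j] by (auto intro: null_setsI)
  have AE1: "AE z in lborel. z \<notin> ?Z" by (rule AE_I'[OF Znull]) auto
  have AE2: "AE z in lborel. z \<noteq> (0::'a^'m)" by (rule AE_lborel_singleton)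
  have AEz: "AE z in lborel. sgn (z::'a^'m) $ j \<notin> N" using AE1 AE2 by eventually_elim auto
  have "emeasure (sphere_measure :: ('a^'m) measure) {y. y $ j \<in> N} = (\<integral>\<^sup>+y. indicator {y::'a^'m. y $ j \<in> N} y \<partial>sphere_measure)"
    by (subst nn_integral_indicator) auto
  also have "\<dots> = (\<integral>\<^sup>+z. of_nat DIM('a^'m) * (indicator (ball 0 1) z * indicator {y::'a^'m. y $ j \<in> N} (sgn z)) \<partial>lborel)"
    by (subst sphere_nn_integral) auto
  also have "\<dots> = (\<integral>\<^sup>+z. 0 \<partial>(lborel::('a^'m) measure))"
    by (rule nn_integral_cong_AE) (use AEz in \<open>eventually_elim, auto split: split_indicator\<close>)
  finally have "emeasure (sphere_measure :: ('a^'m) measure) {y. y $ j \<in> N} = 0" by simp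
  thus ?thesis by (subst AE_iff_measurable[where N="{y. y $ j \<in> N}"]) auto
qed

lemma if_bound:
  fixes f :: "'m::finite \<Rightarrow> real^'n::finite \<Rightarrow> real"
  assumes m2: "CARD('m) \<ge> 2" and fm[measurable]: "\<And>j. f j \<in> borel_measurable borel"
    and fin: "\<And>j. ess_sup_enn (\<lambda>x. ennreal \<bar>f j x\<bar>) < \<infinity>"
  shows "multi_sph_max f x \<le> ennreal (real DIM((real^'n)^'m) * measure lborel (ball (0::(real^'n)^'m) 1))
      * (\<Prod>j\<in>UNIV. ess_sup_enn (\<lambda>x. ennreal \<bar>f j x\<bar>))"
proof -
  define c where "c = (\<lambda>j. ess_sup_enn (\<lambda>x. ennreal \<bar>f j x\<bar>))"
  define C0 where "C0 = real DIM((real^'n)^'m) * measure lborel (ball (0::(real^'n)^'m) 1)"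
  have C0: "C0 \<ge> 0" unfolding C0_def by simp
  define B where "B = (\<Prod>j\<in>UNIV. enn2real (c j))"
  have Bnn: "B \<ge> 0" unfolding B_def by (simp add: prod_nonneg)
  have cfin: "\<And>j. c j < \<infinity>" unfolding c_def using fin by simp
  have Bc: "ennreal B = (\<Prod>j\<in>UNIV. c j)"
    unfolding B_def using cfin by (simp add: prod_ennreal[symmetric] ennreal_enn2real less_top)
  define N where "N = (\<lambda>j. {a::real^'n. c j < ennreal \<bar>f j a\<bar>})"
  have Nb[measurable]: "\<And>j. N j \<in> sets borel" unfolding N_def by measurable
  have N0: "emeasure lborel (N j) = 0" for j
  proof -
    have "AE a in lborel. ennreal \<bar>f j a\<bar> \<le> c j" unfolding c_def by (rule ess_sup_AE) measurable
    thus ?thesis by (subst (asm) AE_iff_measurable[where N="N j"]) (auto simp: N_def not_le)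
  qed
  have avg: "sph_avg f x t \<le> ennreal C0 * (\<Prod>j\<in>UNIV. c j)" if t: "t > 0" for t
  proof -
    define N' where "N' = (\<lambda>j. {b::real^'n. x - t *\<^sub>R b \<in> N j})"
    have N'b[measurable]: "\<And>j. N' j \<in> sets borel" unfolding N'_def by measurable
    have N'0: "\<And>j. emeasure lborel (N' j) = 0" unfolding N'_def using t by (intro affine_null N0) auto
    have AEy: "AE y in (sphere_measure::((real^'n)^'m) measure). \<forall>j\<in>UNIV. y $ j \<notin> N' j"
      by (intro AE_finite_allI sphere_coord_null N'0 m2) auto
    define h where "h = (\<lambda>y::(real^'n)^'m. \<Prod>j\<in>UNIV. f j (x - t *\<^sub>R (y $ j)))"
    have hb: "h \<in> borel_measurable borel" unfolding h_def by measurable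
    have hm: "h \<in> borel_measurable sphere_measure"
      using hb measurable_cong_sets[OF sets_sphere refl] by blast
    have hB: "AE y in (sphere_measure::((real^'n)^'m) measure). norm (h y) \<le> B"
      using AEy
    proof eventually_elim
      case (elim y)
      have "norm (h y) = (\<Prod>j\<in>UNIV. \<bar>f j (x - t *\<^sub>R (y $ j))\<bar>)" unfolding h_def by (simp add: abs_prod)
      also have "\<dots> \<le> B" unfolding B_def
      proof (intro prod_mono conjI)
        fix j
        have "ennreal \<bar>f j (x - t *\<^sub>R (y $ j))\<bar> \<le> c j" using elim by (auto simp: N'_def N_def not_less)
        hence "enn2real (ennreal \<bar>f j (x - t *\<^sub>R (y $ j))\<bar>) \<le> enn2real (c j)"
          by (rule enn2real_mono) (use cfin in auto)
        thus "\<bar>f j (x - t *\<^sub>R (y $ j))\<bar> \<le> enn2real (c j)" by simp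
      qed simp
      finally show ?case .
    qed
    have "(\<integral>\<^sup>+y. ennreal (norm (h y)) \<partial>sphere_measure) \<le> (\<integral>\<^sup>+y. ennreal B \<partial>(sphere_measure::((real^'n)^'m) measure))"
      by (rule nn_integral_mono_AE) (use hB in \<open>eventually_elim, auto intro: ennreal_leI\<close>)
    also have "\<dots> = ennreal B * ennreal C0" by (simp add: sphere_total C0_def)
    finally have bnd: "(\<integral>\<^sup>+y. ennreal (norm (h y)) \<partial>sphere_measure) \<le> ennreal B * ennreal C0" .
    hence int: "integrable sphere_measure h"
      by (intro integrableI_bounded hm) (auto simp: ennreal_mult_less_top le_less_trans)
    have "sph_avg f x t = ennreal \<bar>integral\<^sup>L sphere_measure h\<bar>"
      unfolding sph_avg_def Let_def h_def[symmetric] using int by simp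
    also have "\<dots> \<le> (\<integral>\<^sup>+y. ennreal (norm (h y)) \<partial>sphere_measure)"
      using integral_norm_bound_ennreal[OF int] by simp
    also have "\<dots> \<le> ennreal B * ennreal C0" by (rule bnd)
    finally show ?thesis by (simp add: Bc mult.commute)
  qed
  show ?thesis unfolding multi_sph_max_def
    by (rule SUP_least) (use avg in \<open>auto simp: c_def C0_def\<close>)
qed

lemma onlyif_bound:
  fixes K :: "'m::finite set"
  assumes Ke: "K \<noteq> {}"
  defines "f \<equiv> (\<lambda>j (a::real^'n::finite). if j \<in> K then indicator (cball 0 1) a else (1::real))"
  shows "\<exists>c>0. \<forall>x::real^'n. norm x \<ge> 1 \<longrightarrow> ennreal (c / norm x ^ (card K * CARD('n))) \<le> multi_sph_max f x"
proof -
  obtain c where c: "c > 0" and cZ: "\<And>x::real^'n. norm x \<ge> 1 \<Longrightarrow> (\<exists>t>0. ennreal (c / norm x ^ (card K * DIM(real^'n)))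
     \<le> emeasure lborel {z::(real^'n)^'m. z \<in> ball 0 1 \<and> z \<noteq> 0 \<and> (\<forall>j\<in>K. norm (x - t *\<^sub>R (sgn z $ j)) \<le> 1)})"
    using lower_Z[OF Ke, where 'a="real^'n"] by blast
  show ?thesis
  proof (rule exI[of _ c], intro conjI allI impI c)
    fix x :: "real^'n" assume x1: "norm x \<ge> 1"
    obtain t where t: "t > 0" and tb: "ennreal (c / norm x ^ (card K * DIM(real^'n)))
     \<le> emeasure lborel {z::(real^'n)^'m. z \<in> ball 0 1 \<and> z \<noteq> 0 \<and> (\<forall>j\<in>K. norm (x - t *\<^sub>R (sgn z $ j)) \<le> 1)}"
      using cZ[OF x1] by blast
    let ?Z = "{z::(real^'n)^'m. z \<in> ball 0 1 \<and> z \<noteq> 0 \<and> (\<forall>j\<in>K. norm (x - t *\<^sub>R (sgn z $ j)) \<le> 1)}"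
    have Zb[measurable]: "?Z \<in> sets borel" by measurable
    define h where "h = (\<lambda>y::(real^'n)^'m. \<Prod>j\<in>UNIV. f j (x - t *\<^sub>R (y $ j)))"
    have cb[measurable]: "cball (0::real^'n) 1 \<in> sets borel" by simp
    have fm[measurable]: "f j \<in> borel_measurable borel" for j
      by (cases "j \<in> K") (simp_all add: f_def borel_measurable_indicator)
    have hb[measurable]: "h \<in> borel_measurable borel" unfolding h_def by measurable
    have hm: "h \<in> borel_measurable sphere_measure"
      using hb measurable_cong_sets[OF sets_sphere refl] by blast
    have h01: "0 \<le> h y \<and> h y \<le> 1" for y
      unfolding h_def f_def by (auto intro!: prod_nonneg prod_le_1 split: split_indicator)
    interpret finite_measure "sphere_measure :: ((real^'n)^'m) measure" by (rule finite_sphere)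
    have int: "integrable sphere_measure h"
      by (rule integrable_const_bound[where B=1]) (use h01 hm in auto)
    have "sph_avg f x t = ennreal \<bar>integral\<^sup>L sphere_measure h\<bar>"
      unfolding sph_avg_def Let_def h_def[symmetric] using int by simp
    also have "\<dots> = ennreal (integral\<^sup>L sphere_measure h)"
      using h01 by (subst abs_of_nonneg) (auto intro: integral_nonneg)
    also have "\<dots> = (\<integral>\<^sup>+y. ennreal (h y) \<partial>sphere_measure)"
      using h01 by (subst nn_integral_eq_integral[OF int]) auto
    also have "\<dots> = (\<integral>\<^sup>+z. of_nat DIM((real^'n)^'m) * (indicator (ball 0 1) z * ennreal (h (sgn z))) \<partial>lborel)"
      by (subst sphere_nn_integral) auto
    also have "\<dots> \<ge> (\<integral>\<^sup>+z. indicator ?Z z \<partial>lborel)"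
    proof (intro nn_integral_mono)
      fix z :: "(real^'n)^'m"
      show "indicator ?Z z \<le> of_nat DIM((real^'n)^'m) * (indicator (ball 0 1) z * ennreal (h (sgn z)))"
      proof (cases "z \<in> ?Z")
        case True
        have "h (sgn z) = 1" unfolding h_def
        proof (intro prod.neutral ballI)
          fix j show "f j (x - t *\<^sub>R (sgn z $ j)) = 1"
            using True by (auto simp: f_def dist_norm norm_minus_commute split: split_indicator)
        qed
        moreover have "(1::ennreal) \<le> of_nat DIM((real^'n)^'m)"
          using DIM_positive[where 'a="(real^'n)^'m"] by (metis Suc_le_eq of_nat_1 of_nat_le_iff One_nat_def)
        ultimately show ?thesis using True by simp
      qed simp
    qed
    finally have "emeasure lborel ?Z \<le> sph_avg f x t" by simp
    also have "sph_avg f x t \<le> multi_sph_max f x" unfolding multi_sph_max_def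
      using t by (intro SUP_upper) auto
    finally show "ennreal (c / norm x ^ (card K * CARD('n))) \<le> multi_sph_max f x"
      using tb by simp
  qed
qed

lemma prod_less_top_enn:
  fixes a :: "'b \<Rightarrow> ennreal"
  assumes "finite A" "\<And>j. j \<in> A \<Longrightarrow> a j < \<infinity>"
  shows "(\<Prod>j\<in>A. a j) < \<infinity>"
  using assms by (induction A rule: finite_induct) (auto simp: ennreal_mult_less_top)

lemma enn_powr_top[simp]: "enn_powr top r = top"
  by (simp add: enn_powr_def)

lemma enn_powr_less_top: "g \<noteq> \<infinity> \<Longrightarrow> enn_powr g r < \<infinity>"
  by (simp add: enn_powr_def)

theorem proposition2:
  fixes p :: "'m::finite \<Rightarrow> ennreal"
  assumes "CARD('n::finite) \<ge> 2"
    and "CARD('m) \<ge> 2"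
    and "\<forall>j. p j \<in> {1, \<infinity>}"
  shows "(\<exists>C::real. \<forall>f :: 'm \<Rightarrow> real^'n \<Rightarrow> real.
             (\<forall>j. f j \<in> borel_measurable lborel \<and> Lq_norm (p j) (\<lambda>x. ennreal \<bar>f j x\<bar>) < \<infinity>) \<longrightarrow>
             Lq_norm (inverse (\<Sum>j\<in>UNIV. inverse (p j))) (multi_sph_max f)
               \<le> ennreal C * (\<Prod>j\<in>UNIV. Lq_norm (p j) (\<lambda>x. ennreal \<bar>f j x\<bar>)))
         \<longleftrightarrow> (\<forall>j. p j = \<infinity>)"
proof
  assume ex: "\<exists>C::real. \<forall>f :: 'm \<Rightarrow> real^'n \<Rightarrow> real.
             (\<forall>j. f j \<in> borel_measurable lborel \<and> Lq_norm (p j) (\<lambda>x. ennreal \<bar>f j x\<bar>) < \<infinity>) \<longrightarrow>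
             Lq_norm (inverse (\<Sum>j\<in>UNIV. inverse (p j))) (multi_sph_max f)
               \<le> ennreal C * (\<Prod>j\<in>UNIV. Lq_norm (p j) (\<lambda>x. ennreal \<bar>f j x\<bar>))"
  show "\<forall>j. p j = \<infinity>"
  proof (rule ccontr)
    assume nall: "\<not> (\<forall>j. p j = \<infinity>)"
    define K where "K = {j. p j = 1}"
    have pK: "\<And>j. p j = (if j \<in> K then 1 else \<infinity>)" using assms(3) by (auto simp: K_def)
    have Ke: "K \<noteq> {}" using nall pK by (metis empty_iff)
    define k where "k = card K"
    have k1: "k \<ge> 1" unfolding k_def using Ke by (simp add: Suc_le_eq card_gt_0_iff)
    obtain C where C: "\<And>f :: 'm \<Rightarrow> real^'n \<Rightarrow> real.
             (\<forall>j. f j \<in> borel_measurable lborel \<and> Lq_norm (p j) (\<lambda>x. ennreal \<bar>f j x\<bar>) < \<infinity>) \<Longrightarrow>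
             Lq_norm (inverse (\<Sum>j\<in>UNIV. inverse (p j))) (multi_sph_max f)
               \<le> ennreal C * (\<Prod>j\<in>UNIV. Lq_norm (p j) (\<lambda>x. ennreal \<bar>f j x\<bar>))"
      using ex by blast
    define f where "f = (\<lambda>j (a::real^'n). if j \<in> K then indicator (cball 0 1) a else (1::real))"
    have cb[measurable]: "cball (0::real^'n) 1 \<in> sets borel" by simp
    have fm: "f j \<in> borel_measurable borel" for j
      by (cases "j \<in> K") (simp_all add: f_def borel_measurable_indicator)
    have fin: "Lq_norm (p j) (\<lambda>x. ennreal \<bar>f j x\<bar>) < \<infinity>" for j
    proof (cases "j \<in> K")
      case True
      have "(\<integral>\<^sup>+x. enn_powr (ennreal \<bar>f j x\<bar>) 1 \<partial>lborel) = (\<integral>\<^sup>+x. indicator (cball (0::real^'n) 1) x \<partial>lborel)"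
        by (intro nn_integral_cong) (auto simp: f_def True enn_powr_ennreal split: split_indicator)
      also have "\<dots> = emeasure lborel (cball (0::real^'n) 1)" by simp
      also have "\<dots> < \<infinity>" by (rule emeasure_lborel_cball_finite)
      finally have ne: "(\<integral>\<^sup>+x. enn_powr (ennreal \<bar>f j x\<bar>) 1 \<partial>lborel) \<noteq> \<infinity>" by simp
      have "Lq_norm (p j) (\<lambda>x. ennreal \<bar>f j x\<bar>) = enn_powr (\<integral>\<^sup>+x. enn_powr (ennreal \<bar>f j x\<bar>) 1 \<partial>lborel) 1"
        unfolding Lq_norm_def using True pK[of j] by simp
      thus ?thesis using enn_powr_less_top[OF ne] by simp
    next
      case False
      have "ess_sup_enn (\<lambda>x. ennreal \<bar>f j x\<bar>) \<le> 1" by (rule ess_sup_le) (simp add: f_def False)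
      thus ?thesis unfolding Lq_norm_def using False pK[of j] by (simp add: le_less_trans)
    qed
    have ineq: "Lq_norm (inverse (\<Sum>j\<in>UNIV. inverse (p j))) (multi_sph_max f)
               \<le> ennreal C * (\<Prod>j\<in>UNIV. Lq_norm (p j) (\<lambda>x. ennreal \<bar>f j x\<bar>))"
      using fm fin by (intro C) auto
    have rhs: "ennreal C * (\<Prod>j\<in>UNIV. Lq_norm (p j) (\<lambda>x. ennreal \<bar>f j x\<bar>)) < \<infinity>"
    proof -
      have "(\<Prod>j\<in>UNIV. Lq_norm (p j) (\<lambda>x. ennreal \<bar>f j x\<bar>)) < \<infinity>"
        using fin by (intro prod_less_top_enn) auto
      thus ?thesis by (simp add: ennreal_mult_less_top)
    qed
    have sum: "(\<Sum>j\<in>UNIV. inverse (p j)) = of_nat k"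
    proof -
      have "(\<Sum>j\<in>UNIV. inverse (p j)) = (\<Sum>j\<in>UNIV. if j \<in> K then 1 else (0::ennreal))"
        by (intro sum.cong) (auto simp: pK)
      also have "\<dots> = of_nat k" by (simp add: sum.If_cases k_def)
      finally show ?thesis .
    qed
    have q: "inverse (of_nat k :: ennreal) = ennreal (1 / real k)"
      using k1 by (simp add: ennreal_of_nat_eq_real_of_nat inverse_ennreal divide_inverse)
    have kr: "real k > 0" using k1 by simp
    obtain c where c: "c > 0" and cb: "\<And>x::real^'n. norm x \<ge> 1 \<Longrightarrow> ennreal (c / norm x ^ (k * CARD('n))) \<le> multi_sph_max f x"
      using onlyif_bound[OF Ke, where 'n='n] unfolding f_def[symmetric] k_def by blast
    define c' where "c' = c powr (1 / real k)"
    have c': "c' > 0" unfolding c'_def using c by simp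
    have pw: "ennreal c' * (indicator {x::real^'n. 1 \<le> norm x} x * ennreal (1 / norm x ^ DIM(real^'n)))
        \<le> enn_powr (multi_sph_max f x) (1 / real k)" for x :: "real^'n"
    proof (cases "1 \<le> norm x")
      case True
      have xp: "norm x > 0" using True by linarith
      have "(c / norm x ^ (k * CARD('n))) powr (1 / real k) = c' * (1 / norm x ^ CARD('n))"
      proof -
        have "(c / norm x ^ (k * CARD('n))) powr (1 / real k) = c' / (norm x ^ (k * CARD('n))) powr (1 / real k)"
          unfolding c'_def by (rule powr_divide)
        also have "(norm x ^ (k * CARD('n))) powr (1 / real k) = norm x ^ CARD('n)"
        proof -
          have "norm x ^ (k * CARD('n)) = norm x powr (real (k * CARD('n)))" using powr_realpow[OF xp, of "k * CARD('n)"] by simp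
          hence "(norm x ^ (k * CARD('n))) powr (1 / real k) = norm x powr (real (k * CARD('n)) * (1 / real k))"
            by (simp add: powr_powr)
          also have "real (k * CARD('n)) * (1 / real k) = real CARD('n)" using kr by simp
          finally show ?thesis using xp by (simp add: powr_realpow)
        qed
        finally show ?thesis by simp
      qed
      hence "ennreal c' * ennreal (1 / norm x ^ CARD('n)) = enn_powr (ennreal (c / norm x ^ (k * CARD('n)))) (1 / real k)"
        using c c' xp by (simp add: enn_powr_ennreal ennreal_mult[symmetric])
      also have "\<dots> \<le> enn_powr (multi_sph_max f x) (1 / real k)"
        using cb[OF True] kr by (intro enn_powr_mono) auto
      finally show ?thesis using True by simp
    qed simp
    have "(\<integral>\<^sup>+x. enn_powr (multi_sph_max f x) (1 / real k) \<partial>lborel)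
       \<ge> (\<integral>\<^sup>+x. ennreal c' * (indicator {x::real^'n. 1 \<le> norm x} x * ennreal (1 / norm x ^ DIM(real^'n))) \<partial>(lborel::(real^'n) measure))"
      by (intro nn_integral_mono pw)
    also have "(\<integral>\<^sup>+x. ennreal c' * (indicator {x::real^'n. 1 \<le> norm x} x * ennreal (1 / norm x ^ DIM(real^'n))) \<partial>(lborel::(real^'n) measure))
        = ennreal c' * (\<integral>\<^sup>+x. indicator {x::real^'n. 1 \<le> norm x} x * ennreal (1 / norm x ^ DIM(real^'n)) \<partial>(lborel::(real^'n) measure))"
      by (rule nn_integral_cmult) measurable
    also have "\<dots> = \<infinity>" using c' divergence[where 'a="real^'n"] by (simp add: ennreal_mult_top)
    finally have inf: "(\<integral>\<^sup>+x. enn_powr (multi_sph_max f x) (1 / real k) \<partial>lborel) = \<infinity>"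
      by (simp add: top_unique)
    have "Lq_norm (inverse (\<Sum>j\<in>UNIV. inverse (p j))) (multi_sph_max f) = \<infinity>"
      unfolding sum q Lq_norm_def using kr by (simp add: inf)
    thus False using ineq rhs by simp
  qed
next
  assume allinf: "\<forall>j. p j = \<infinity>"
  define C0 where "C0 = real DIM((real^'n)^'m) * measure lborel (ball (0::(real^'n)^'m) 1)"
  show "\<exists>C::real. \<forall>f :: 'm \<Rightarrow> real^'n \<Rightarrow> real.
             (\<forall>j. f j \<in> borel_measurable lborel \<and> Lq_norm (p j) (\<lambda>x. ennreal \<bar>f j x\<bar>) < \<infinity>) \<longrightarrow>
             Lq_norm (inverse (\<Sum>j\<in>UNIV. inverse (p j))) (multi_sph_max f)
               \<le> ennreal C * (\<Prod>j\<in>UNIV. Lq_norm (p j) (\<lambda>x. ennreal \<bar>f j x\<bar>))"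
  proof (rule exI[of _ C0], intro allI impI)
    fix f :: "'m \<Rightarrow> real^'n \<Rightarrow> real"
    assume hyp: "\<forall>j. f j \<in> borel_measurable lborel \<and> Lq_norm (p j) (\<lambda>x. ennreal \<bar>f j x\<bar>) < \<infinity>"
    have fm: "\<And>j. f j \<in> borel_measurable borel" using hyp by simp
    have fin: "\<And>j. ess_sup_enn (\<lambda>x. ennreal \<bar>f j x\<bar>) < \<infinity>" using hyp allinf by (simp add: Lq_norm_def)
    have "Lq_norm (inverse (\<Sum>j\<in>UNIV. inverse (p j))) (multi_sph_max f) = ess_sup_enn (multi_sph_max f)"
      using allinf by (simp add: Lq_norm_def)
    also have "\<dots> \<le> ennreal C0 * (\<Prod>j\<in>UNIV. ess_sup_enn (\<lambda>x. ennreal \<bar>f j x\<bar>))"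
      unfolding C0_def by (rule ess_sup_le) (rule if_bound[OF assms(2) fm fin])
    also have "(\<Prod>j\<in>UNIV. ess_sup_enn (\<lambda>x. ennreal \<bar>f j x\<bar>)) = (\<Prod>j\<in>UNIV. Lq_norm (p j) (\<lambda>x. ennreal \<bar>f j x\<bar>))"
      using allinf by (simp add: Lq_norm_def)
    finally show "Lq_norm (inverse (\<Sum>j\<in>UNIV. inverse (p j))) (multi_sph_max f)
               \<le> ennreal C0 * (\<Prod>j\<in>UNIV. Lq_norm (p j) (\<lambda>x. ennreal \<bar>f j x\<bar>))" .
  qed
qed

end
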